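(* Let $\mathbf{u}$ be a Sturmian sequence over $\{a,b\}$ in which the frequency of $b$ is an irrational number $\alpha\in(0,1)$. Let $\mathbf{a}=1^\omega$ and let $\mathbf{b}$ be a Sturmian sequence over $\{2,3\}$ in which the frequency of the letter $3$ is $\gamma\in(0,1)$. Let $\mathbf{v}=\mathrm{colour}(\mathbf{u},\mathbf{a},\mathbf{b})$. Then: (i) $\mathbf{v}$ is $2$-balanced, and if $\alpha\notin\{\frac{1}{1+\gamma},\frac{1}{2-\gamma}\}$ then $\mathbf{v}$ is not $1$-balanced; (ii) for every integer $n\ge1$, $$\mathcal C_{\mathbf{v}}(n)\le P_\alpha(n)+(n+1)\lceil n\alpha\rceil\qquad\text{and}\qquad \mathcal C^{ab}_{\mathbf{v}}(n)\le 4.$$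
   Context: A sequence is $C$-balanced ($C\ge1$ an integer) if for any two of its factors $u,v$ with $|u|=|v|$ and every letter $x$, $\bigl||u|_x-|v|_x\bigr|\le C$, where $|w|_x$ counts occurrences of $x$ in $w$. A Sturmian sequence is an aperiodic (not eventually periodic) $1$-balanced sequence over a two-letter alphabet; letter frequencies in it exist and are irrational. Colouring: given $\mathbf{u}$ over $\{a,b\}$ and sequences $\mathbf{a},\mathbf{b}$ over disjoint alphabets, $\mathrm{colour}(\mathbf{u},\mathbf{a},\mathbf{b})$ is obtained from $\mathbf{u}$ by replacing the subsequence of all occurrences of $a$ (in order) by $\mathbf{a}$ and the subsequence of all occurrences of $b$ (in order) by $\mathbf{b}$. The factor complexity $\mathcal C_{\mathbf{v}}(n)$ is the number of distinct factors of length $n$ of $\mathbf{v}$; the abelian complexity $\mathcal C^{ab}_{\mathbf{v}}(n)$ is the number of distinct Parikh vectors $\Psi(w)$ (vector of letter counts) of factors $w$ of length $n$. For irrational $\alpha\in(0,1)$, $P_\alpha(n)$ denotes the number of factors $u$ of length $n$ of a Sturmian sequence over $\{a,b\}$ with frequency of $b$ equal to $\alpha$ such that $(|u|_a,|u|_b)=(\lfloor(1-\alpha)n\rfloor,\lceil n\alpha\rceil)$ (this depends only on $\alpha$). *)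

theory Defs
  imports Complex_Main
begin

definition factor_at :: "(nat \<Rightarrow> 'a) \<Rightarrow> nat \<Rightarrow> nat \<Rightarrow> 'a list" where
  "factor_at u i n = map u [i..<i+n]"

definition factors :: "(nat \<Rightarrow> 'a) \<Rightarrow> nat \<Rightarrow> 'a list set" where
  "factors u n = {factor_at u i n | i. True}"

definition C_balanced :: "nat \<Rightarrow> (nat \<Rightarrow> 'a) \<Rightarrow> bool" where
  "C_balanced C u \<longleftrightarrow> (\<forall>n x y z. x \<in> factors u n \<longrightarrow> y \<in> factors u n \<longrightarrow>
       \<bar>int (count_list x z) - int (count_list y z)\<bar> \<le> int C)"

definition eventually_periodic :: "(nat \<Rightarrow> 'a) \<Rightarrow> bool" where
  "eventually_periodic u \<longleftrightarrow> (\<exists>p>0. \<exists>N. \<forall>n\<ge>N. u (n + p) = u n)"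

definition sturmian :: "(nat \<Rightarrow> 'a) \<Rightarrow> 'a \<Rightarrow> 'a \<Rightarrow> bool" where
  "sturmian u a b \<longleftrightarrow> a \<noteq> b \<and> range u \<subseteq> {a, b} \<and> \<not> eventually_periodic u \<and> C_balanced 1 u"

definition has_freq :: "(nat \<Rightarrow> 'a) \<Rightarrow> 'a \<Rightarrow> real \<Rightarrow> bool" where
  "has_freq u x f \<longleftrightarrow> (\<lambda>n. real (count_list (factor_at u 0 n) x) / real n) \<longlonglongrightarrow> f"

text \<open>colour(u, A, B): the k-th occurrence of a is replaced by A k, the k-th occurrence of b by B k.\<close>
definition colour :: "(nat \<Rightarrow> 'a) \<Rightarrow> 'a \<Rightarrow> (nat \<Rightarrow> 'b) \<Rightarrow> (nat \<Rightarrow> 'b) \<Rightarrow> nat \<Rightarrow> 'b" where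
  "colour u a A B n = (if u n = a then A (count_list (factor_at u 0 n) a)
                       else B (count_list (factor_at u 0 n) (u n)))"

definition factor_complexity :: "(nat \<Rightarrow> 'a) \<Rightarrow> nat \<Rightarrow> nat" where
  "factor_complexity u n = card (factors u n)"

definition parikh :: "'a list \<Rightarrow> 'a \<Rightarrow> nat" where
  "parikh w = (\<lambda>x. count_list w x)"

definition abelian_complexity :: "(nat \<Rightarrow> 'a) \<Rightarrow> nat \<Rightarrow> nat" where
  "abelian_complexity u n = card (parikh ` factors u n)"

text \<open>P_alpha(n), computed from a Sturmian sequence u over {a,b} with frequency of b equal to alpha
  (the value depends only on alpha).\<close>
definition P_alpha :: "(nat \<Rightarrow> 'a) \<Rightarrow> 'a \<Rightarrow> 'a \<Rightarrow> real \<Rightarrow> nat \<Rightarrow> nat" where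
  "P_alpha u a b \<alpha> n = card {w \<in> factors u n.
       int (count_list w a) = \<lfloor>(1 - \<alpha>) * real n\<rfloor> \<and> int (count_list w b) = \<lceil>real n * \<alpha>\<rceil>}"

end

theory Submission
  imports Defs "HOL-Analysis.Kronecker_Approximation_Theorem"
begin

definition cnt :: "(nat \<Rightarrow> 'a) \<Rightarrow> 'a \<Rightarrow> nat \<Rightarrow> nat \<Rightarrow> nat" where
  "cnt w x i n = count_list (factor_at w i n) x"

lemma factor_at_0[simp]: "factor_at w i 0 = []"
  by (simp add: factor_at_def)

lemma factor_at_Suc: "factor_at w i (Suc n) = w i # factor_at w (Suc i) n"
  unfolding factor_at_def by (simp add: upt_rec)

lemma factor_at_snoc: "factor_at w i (Suc n) = factor_at w i n @ [w (i+n)]"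
  unfolding factor_at_def by simp

lemma factor_at_add: "factor_at w i (n+m) = factor_at w i n @ factor_at w (i+n) m"
  unfolding factor_at_def using upt_add_eq_append[of i "i+n" m] by (simp add: add.assoc)

lemma length_factor_at[simp]: "length (factor_at w i n) = n"
  by (simp add: factor_at_def)

lemma nth_factor_at[simp]: "k < n \<Longrightarrow> factor_at w i n ! k = w (i+k)"
  by (simp add: factor_at_def)

lemma set_factor_at: "set (factor_at w i n) = w ` {i..<i+n}"
  by (simp add: factor_at_def)

lemma cnt_0[simp]: "cnt w x i 0 = 0" by (simp add: cnt_def)

lemma cnt_Suc: "cnt w x i (Suc n) = cnt w x i n + (if w (i+n) = x then 1 else 0)"
  by (simp add: cnt_def factor_at_snoc)

lemma cnt_add: "cnt w x i (n+m) = cnt w x i n + cnt w x (i+n) m"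
  by (simp add: cnt_def factor_at_add)

lemma cnt_le: "cnt w x i n \<le> n"
  unfolding cnt_def by (metis count_le_length length_factor_at)

lemma factor_in_factors: "factor_at w i n \<in> factors w n"
  by (auto simp: factors_def)

lemma factors_iff: "y \<in> factors w n \<longleftrightarrow> (\<exists>i. y = factor_at w i n)"
  by (auto simp: factors_def)

lemma bal_cnt:
  assumes "C_balanced C w"
  shows "\<bar>int (cnt w x i n) - int (cnt w x j n)\<bar> \<le> int C"
  using assms unfolding C_balanced_def cnt_def by (meson factor_in_factors)

lemma cnt_mult: "cnt w x 0 (k*n) = (\<Sum>j<k. cnt w x (j*n) n)"
proof (induction k)
  case 0 then show ?case by simp
next
  case (Suc k)
  have "cnt w x 0 (Suc k * n) = cnt w x 0 (k*n + n)" by (simp add: add.commute)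
  also have "\<dots> = cnt w x 0 (k*n) + cnt w x (k*n) n" by (simp add: cnt_add)
  finally show ?case using Suc by simp
qed

lemma freqA:
  assumes bal: "C_balanced 1 w"
    and fr: "(\<lambda>n. real (cnt w x 0 n) / real n) \<longlonglongrightarrow> f"
  shows "\<bar>real (cnt w x i n) - real n * f\<bar> \<le> 1"
proof (cases "n = 0")
  case True then show ?thesis by simp
next
  case False
  define c where "c = real (cnt w x i n)"
  have win: "c - 1 \<le> real (cnt w x j n) \<and> real (cnt w x j n) \<le> c + 1" for j
    using bal_cnt[OF bal, of x i n j] unfolding c_def by linarith
  have sub: "(\<lambda>k. real (cnt w x 0 (k*n)) / real (k*n)) \<longlonglongrightarrow> f"
  proof -
    have "filterlim (\<lambda>k. k*n) at_top at_top"
      using False by (intro filterlim_subseq) (auto simp: strict_mono_def)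
    from filterlim_compose[OF fr this] show ?thesis by (simp add: o_def)
  qed
  have lo: "(c-1)/real n \<le> real (cnt w x 0 (k*n)) / real (k*n)" if "k \<ge> 1" for k
  proof -
    have "real k * (c-1) \<le> real (cnt w x 0 (k*n))"
    proof -
      have "real (cnt w x 0 (k*n)) = (\<Sum>j<k. real (cnt w x (j*n) n))"
        by (simp add: cnt_mult)
      also have "\<dots> \<ge> (\<Sum>j<k. c - 1)" by (intro sum_mono) (use win in auto)
      finally show ?thesis by simp
    qed
    moreover have e: "(c-1)/real n = real k*(c-1)/real (k*n)" using False that by simp
    ultimately show ?thesis by (metis divide_right_mono of_nat_0_le_iff)
  qed
  have hi: "real (cnt w x 0 (k*n)) / real (k*n) \<le> (c+1)/real n" if "k \<ge> 1" for k
  proof -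
    have "real (cnt w x 0 (k*n)) \<le> real k * (c+1)"
    proof -
      have "real (cnt w x 0 (k*n)) = (\<Sum>j<k. real (cnt w x (j*n) n))"
        by (simp add: cnt_mult)
      also have "\<dots> \<le> (\<Sum>j<k. c + 1)" by (intro sum_mono) (use win in auto)
      finally show ?thesis by simp
    qed
    moreover have e: "(c+1)/real n = real k*(c+1)/real (k*n)" using False that by simp
    ultimately show ?thesis by (metis divide_right_mono of_nat_0_le_iff)
  qed
  have "(c-1)/real n \<le> f"
    by (rule tendsto_lowerbound[OF sub]) (use lo in \<open>auto simp: eventually_at_top_linorder\<close>)
  moreover have "f \<le> (c+1)/real n"
    by (rule tendsto_upperbound[OF sub]) (use hi in \<open>auto simp: eventually_at_top_linorder\<close>)
  ultimately show ?thesis using False unfolding c_def[symmetric]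
    by (simp add: field_simps abs_le_iff)
qed

lemma cnt_Suc_front: "cnt w x i (Suc n) = (if w i = x then 1 else 0) + cnt w x (Suc i) n"
  by (simp add: cnt_def factor_at_Suc)

lemma nat_pairwise_le1:
  fixes S :: "nat set"
  assumes "S \<noteq> {}" and "\<And>x y. x \<in> S \<Longrightarrow> y \<in> S \<Longrightarrow> x \<le> y + 1"
  shows "\<exists>m. S \<subseteq> {m, m+1}"
proof -
  define m where "m = (LEAST x. x \<in> S)"
  have mS: "m \<in> S" using assms(1) unfolding m_def by (meson LeastI ex_in_conv)
  have "y \<in> {m, m+1}" if "y \<in> S" for y
  proof -
    have "m \<le> y" unfolding m_def by (rule Least_le) fact
    moreover have "y \<le> m + 1" using assms(2)[OF that mS] .
    ultimately show ?thesis by auto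
  qed
  then show ?thesis by blast
qed

lemma bal_cnt_set:
  assumes "C_balanced 1 w"
  shows "\<exists>m. {cnt w x i n | i. True} \<subseteq> {m, m+1}"
proof (rule nat_pairwise_le1)
  fix p q assume "p \<in> {cnt w x i n |i. True}" "q \<in> {cnt w x i n |i. True}"
  then obtain i j where "p = cnt w x i n" "q = cnt w x j n" by auto
  with bal_cnt[OF assms, of x i n j] show "p \<le> q + 1" by auto
qed auto

lemma bal_cnt2:
  assumes bal: "C_balanced 1 w" and "k' \<le> k+1" "k \<le> k'+1"
  shows "\<bar>int (cnt w z p k) - int (cnt w z q k')\<bar> \<le> 2"
proof -
  have "k' = k \<or> k' = k + 1 \<or> k = k' + 1" using assms by auto
  moreover have "cnt w z q (k+1) \<le> cnt w z q k + 1" "cnt w z q k \<le> cnt w z q (k+1)"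
    by (auto simp: cnt_Suc)
  moreover have "cnt w z p (k'+1) \<le> cnt w z p k' + 1" "cnt w z p k' \<le> cnt w z p (k'+1)"
    by (auto simp: cnt_Suc)
  moreover note bal_cnt[OF bal, of z p k q] bal_cnt[OF bal, of z p k' q]
  ultimately show ?thesis by (auto simp: abs_le_iff)
qed

lemma card_le_4: "card {x1,x2,x3,x4} \<le> 4"
  by (simp add: card_insert_if)

locale colsetup =
  fixes u :: "nat \<Rightarrow> 'a" and a b :: 'a and bb :: "nat \<Rightarrow> nat"
  assumes ab: "a \<noteq> b" and ru: "\<And>i. u i = a \<or> u i = b" and balu: "C_balanced 1 u"
    and rbb: "\<And>i. bb i = 2 \<or> bb i = 3" and balb: "C_balanced 1 bb"
begin

definition B where "B i = cnt u b 0 i"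
definition v where "v i = (if u i = a then 1 else bb (B i))"

lemma v_at: "v i = (if u i = a then 1 else bb (B i))" by (simp add: v_def)

lemma B_Suc: "B (Suc i) = B i + (if u i = b then 1 else 0)"
  by (simp add: B_def cnt_Suc)

lemma B_add: "B (i + n) = B i + cnt u b i n"
  by (simp add: B_def cnt_add)

lemma cnt_ua: "cnt u a i n = n - cnt u b i n"
proof (induction n)
  case (Suc n)
  have "cnt u b i n \<le> n" by (rule cnt_le)
  then show ?case using Suc ru[of "i+n"] ab by (auto simp: cnt_Suc)
qed simp

lemma cnt_bb2: "cnt bb 2 p k = k - cnt bb 3 p k"
proof (induction k)
  case (Suc k)
  have "cnt bb 3 p k \<le> k" by (rule cnt_le)
  then show ?case using Suc rbb[of "p+k"] by (auto simp: cnt_Suc)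
qed simp

lemma cnt_bb_other: "z \<noteq> 2 \<Longrightarrow> z \<noteq> 3 \<Longrightarrow> cnt bb z p k = 0"
  by (induction k) (use rbb in \<open>auto simp: cnt_Suc\<close>)

lemma cnt_v: "cnt v z i n = (if z = 1 then cnt u a i n else cnt bb z (B i) (cnt u b i n))"
proof (induction n arbitrary: i)
  case 0 then show ?case by simp
next
  case (Suc n)
  have IH: "cnt v z (Suc i) n = (if z = 1 then cnt u a (Suc i) n else cnt bb z (B (Suc i)) (cnt u b (Suc i) n))"
    by (rule Suc)
  show ?case
  proof (cases "u i = a")
    case True
    then have "u i \<noteq> b" using ab by auto
    have vi: "v i = 1" using True by (simp add: v_at)
    show ?thesis using True IH \<open>u i \<noteq> b\<close> by (simp add: cnt_Suc_front vi B_Suc)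
  next
    case False
    then have ub: "u i = b" using ru by auto
    have "bb (B i) \<noteq> 1" using rbb[of "B i"] by auto
    have vi: "v i = bb (B i)" using False by (simp add: v_at)
    show ?thesis using False ub IH \<open>bb (B i) \<noteq> 1\<close>
      by (simp add: cnt_Suc_front vi B_Suc)
  qed
qed

lemma v_bal2: "C_balanced 2 v"
  unfolding C_balanced_def
proof (intro allI impI)
  fix n x y z
  assume "x \<in> factors v n" "y \<in> factors v n"
  then obtain i j where x: "x = factor_at v i n" and y: "y = factor_at v j n"
    by (auto simp: factors_iff)
  have cx: "count_list x z = cnt v z i n" and cy: "count_list y z = cnt v z j n"
    by (auto simp: x y cnt_def)
  show "\<bar>int (count_list x z) - int (count_list y z)\<bar> \<le> int 2"
  proof (cases "z = 1")
    case True
    then show ?thesis using bal_cnt[OF balu, of a i n j] unfolding cx cy by (simp add: cnt_v)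
  next
    case False
    have "\<bar>int (cnt u b i n) - int (cnt u b j n)\<bar> \<le> 1" using bal_cnt[OF balu] by simp
    then have "cnt u b j n \<le> cnt u b i n + 1" "cnt u b i n \<le> cnt u b j n + 1" by auto
    from bal_cnt2[OF balb this] False show ?thesis unfolding cx cy by (simp add: cnt_v)
  qed
qed

lemma parikh_v: "parikh (factor_at v i n) =
   (let k = cnt u b i n; c = cnt bb 3 (B i) k in
    (\<lambda>z. if z = 1 then n - k else if z = 3 then c else if z = 2 then k - c else 0))"
  unfolding parikh_def Let_def
  by (rule ext) (auto simp: cnt_def[symmetric] cnt_v cnt_ua cnt_bb2 cnt_bb_other)

lemma v_abelian: "abelian_complexity v n \<le> 4"
proof -
  obtain m where m: "{cnt u b i n | i. True} \<subseteq> {m, m+1}" using bal_cnt_set[OF balu] by blast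
  have "\<exists>c. {cnt bb 3 p k | p. True} \<subseteq> {c, c+1}" for k using bal_cnt_set[OF balb] by blast
  then obtain c where c: "\<And>k. {cnt bb 3 p k | p. True} \<subseteq> {c k, c k+1}" by metis
  define \<phi> where "\<phi> k d = (\<lambda>z::nat. if z = 1 then n - k else if z = 3 then d else if z = 2 then k - d else 0)" for k d
  have "parikh ` factors v n \<subseteq> {\<phi> m (c m), \<phi> m (c m + 1), \<phi> (m+1) (c (m+1)), \<phi> (m+1) (c (m+1) + 1)}"
  proof
    fix P assume "P \<in> parikh ` factors v n"
    then obtain i where P: "P = parikh (factor_at v i n)" by (auto simp: factors_iff)
    have k: "cnt u b i n \<in> {m, m+1}" using m by blast
    have d: "cnt bb 3 (B i) k \<in> {c k, c k + 1}" for k using c[of k] by blast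
    have "P = \<phi> (cnt u b i n) (cnt bb 3 (B i) (cnt u b i n))"
      unfolding P parikh_v \<phi>_def Let_def ..
    then show "P \<in> {\<phi> m (c m), \<phi> m (c m + 1), \<phi> (m+1) (c (m+1)), \<phi> (m+1) (c (m+1) + 1)}"
      using k d[of m] d[of "m+1"] by auto
  qed
  then have "card (parikh ` factors v n) \<le> 4"
    by (meson card_le_4 card_mono finite.emptyI finite.insertI order_trans)
  then show ?thesis by (simp add: abelian_complexity_def)
qed

end

lemma factors_finite:
  assumes "\<And>i. w i \<in> A" "finite A"
  shows "finite (factors w n)"
proof -
  have "factors w n \<subseteq> {xs. set xs \<subseteq> A \<and> length xs = n}"
    using assms(1) by (auto simp: factors_iff set_factor_at)
  moreover have "finite {xs. set xs \<subseteq> A \<and> length xs = n}"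
    by (rule finite_lists_length_eq[OF assms(2)])
  ultimately show ?thesis by (rule finite_subset)
qed

lemma factors_suffix:
  assumes "xs @ ys \<in> factors w n"
  shows "ys \<in> factors w (length ys)"
proof -
  obtain i where i: "xs @ ys = factor_at w i n" using assms by (auto simp: factors_iff)
  have n: "n = length xs + length ys" using arg_cong[OF i, of length] by simp
  have "factor_at w i n = factor_at w i (length xs) @ factor_at w (i + length xs) (length ys)"
    unfolding n factor_at_add ..
  with i have "ys = factor_at w (i + length xs) (length ys)"
    by (simp add: append_eq_append_conv)
  then show ?thesis by (metis factor_in_factors)
qed

lemma diff_suffix:
  "length xs = length ys \<Longrightarrow> xs \<noteq> ys \<Longrightarrow> \<exists>p p' x y s. xs = p @ [x] @ s \<and> ys = p' @ [y] @ s \<and> x \<noteq> y"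
proof (induction xs arbitrary: ys rule: rev_induct)
  case Nil then show ?case by simp
next
  case (snoc z zs)
  obtain ys' y where ys: "ys = ys' @ [y]"
    using snoc.prems(1) by (metis length_append_singleton rev_exhaust list.size(3) nat.distinct(1))
  show ?case
  proof (cases "z = y")
    case False
    then show ?thesis using ys by (intro exI[of _ zs] exI[of _ ys'] exI[of _ z] exI[of _ y] exI[of _ "[]"]) auto
  next
    case True
    then have "zs \<noteq> ys'" "length zs = length ys'" using snoc.prems ys by auto
    from snoc.IH[OF this(2) this(1)] obtain p p' x y' s where
      "zs = p @ [x] @ s" "ys' = p' @ [y'] @ s" "x \<noteq> y'" by blast
    then show ?thesis using ys True
      by (intro exI[of _ p] exI[of _ p'] exI[of _ x] exI[of _ y'] exI[of _ "s @ [y]"]) auto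
  qed
qed

lemma factor_elems:
  assumes "xs \<in> factors w n" "\<And>i. w i = a \<or> w i = b" "x \<in> set xs"
  shows "x = a \<or> x = b"
proof -
  obtain i where "xs = factor_at w i n" using assms(1) by (auto simp: factors_iff)
  then have "x \<in> w ` {i..<i+n}" using assms(3) by (simp add: set_factor_at)
  then show ?thesis using assms(2) by blast
qed

lemma balanced_complexity:
  fixes w :: "nat \<Rightarrow> 'a"
  assumes ab: "a \<noteq> b" and rw: "\<And>i. w i = a \<or> w i = b" and bal: "C_balanced 1 w"
  shows "card (factors w n) \<le> n + 1"
proof (induction n)
  have fin: "finite (factors w m)" for m
    by (rule factors_finite[of w "{a,b}"]) (use rw in auto)
  {
  case 0
  have "factors w 0 = {[]}" by (auto simp: factors_iff)
  then show ?case by simp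
  next
  case (Suc n)
  define X where "X c = {xs \<in> factors w n. xs @ [c] \<in> factors w (Suc n)}" for c
  have sub: "factors w (Suc n) \<subseteq> (\<lambda>xs. xs @ [a]) ` X a \<union> (\<lambda>xs. xs @ [b]) ` X b"
  proof
    fix ys assume ys: "ys \<in> factors w (Suc n)"
    then obtain i where i: "ys = factor_at w i (Suc n)" by (auto simp: factors_iff)
    then have "ys = factor_at w i n @ [w (i+n)]" by (simp add: factor_at_snoc)
    moreover have "factor_at w i n \<in> X (w (i+n))"
      unfolding X_def using ys calculation by (auto simp: factor_in_factors)
    ultimately show "ys \<in> (\<lambda>xs. xs @ [a]) ` X a \<union> (\<lambda>xs. xs @ [b]) ` X b"
      using rw[of "i+n"] by auto
  qed
  have finX: "finite (X c)" for c using fin[of n] unfolding X_def by auto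
  have RS: "card (X a \<inter> X b) \<le> 1"
  proof (rule ccontr)
    assume "\<not> card (X a \<inter> X b) \<le> 1"
    moreover have "finite (X a \<inter> X b)" using finX by auto
    ultimately obtain w1 w2 where w12: "w1 \<in> X a \<inter> X b" "w2 \<in> X a \<inter> X b" "w1 \<noteq> w2"
      using card_le_Suc0_iff_eq by (metis One_nat_def)
    have len: "length w1 = length w2" using w12 unfolding X_def by (auto simp: factors_iff)
    from diff_suffix[OF len w12(3)] obtain p p' x y s where
      d: "w1 = p @ [x] @ s" "w2 = p' @ [y] @ s" "x \<noteq> y" by blast
    have xin: "x = a \<or> x = b" using factor_elems[of w1 w n, OF _ rw] w12 d unfolding X_def by auto
    have yin: "y = a \<or> y = b" using factor_elems[of w2 w n, OF _ rw] w12 d unfolding X_def by auto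
    have F: "x # s @ [c] \<in> factors w (length s + 2)" "y # s @ [c] \<in> factors w (length s + 2)"
      if "c = a \<or> c = b" for c
      using factors_suffix[of p "x # s @ [c]" w "Suc n"] factors_suffix[of p' "y # s @ [c]" w "Suc n"]
        w12 that d unfolding X_def by auto
    have "a # s @ [a] \<in> factors w (length s + 2)" "b # s @ [b] \<in> factors w (length s + 2)"
      using F[of a] F[of b] xin yin d(3) by auto
    then have "\<bar>int (count_list (a # s @ [a]) a) - int (count_list (b # s @ [b]) a)\<bar> \<le> 1"
      using bal unfolding C_balanced_def by (metis of_nat_1)
    then show False using ab by simp
  qed
  have "card (factors w (Suc n)) \<le> card ((\<lambda>xs. xs @ [a]) ` X a) + card ((\<lambda>xs. xs @ [b]) ` X b)"
    by (rule order_trans[OF card_mono[OF _ sub] card_Un_le]) (use finX in auto)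
  also have "\<dots> \<le> card (X a) + card (X b)" by (intro add_mono card_image_le finX)
  also have "\<dots> = card (X a \<union> X b) + card (X a \<inter> X b)" by (rule card_Un_Int[OF finX finX])
  also have "card (X a \<union> X b) \<le> card (factors w n)"
    by (rule card_mono[OF fin]) (auto simp: X_def)
  finally show ?case using RS Suc by simp
  }
qed

fun psi :: "'a \<Rightarrow> 'a list \<Rightarrow> nat list \<Rightarrow> nat list" where
  "psi a [] ys = []"
| "psi a (x # xs) ys = (if x = a then 1 # psi a xs ys else hd ys # psi a xs (tl ys))"

context colsetup begin

lemma factor_v: "factor_at v i n = psi a (factor_at u i n) (factor_at bb (B i) (cnt u b i n))"
proof (induction n arbitrary: i)
  case 0 then show ?case by simp
next
  case (Suc n)
  show ?case
  proof (cases "u i = a")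
    case True
    then have "u i \<noteq> b" using ab by auto
    have vi: "v i = 1" using True by (simp add: v_at)
    show ?thesis using True Suc[of "Suc i"] \<open>u i \<noteq> b\<close>
      by (simp add: factor_at_Suc vi B_Suc cnt_Suc_front)
  next
    case False
    then have ub: "u i = b" using ru by auto
    have vi: "v i = bb (B i)" using False by (simp add: v_at)
    show ?thesis using False ub Suc[of "Suc i"]
      by (simp add: factor_at_Suc vi B_Suc cnt_Suc_front)
  qed
qed

lemma v_complexity_sum:
  "card (factors v n) \<le> (\<Sum>xs\<in>factors u n. count_list xs b + 1)"
proof -
  have finu: "finite (factors u n)" by (rule factors_finite[of u "{a,b}"]) (use ru in auto)
  have finb: "finite (factors bb k)" for k by (rule factors_finite[of bb "{2,3}"]) (use rbb in auto)
  have "factors v n \<subseteq> (\<Union>xs\<in>factors u n. psi a xs ` factors bb (count_list xs b))"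
  proof
    fix ys assume "ys \<in> factors v n"
    then obtain i where "ys = factor_at v i n" by (auto simp: factors_iff)
    then have "ys = psi a (factor_at u i n) (factor_at bb (B i) (count_list (factor_at u i n) b))"
      by (simp add: factor_v cnt_def)
    then show "ys \<in> (\<Union>xs\<in>factors u n. psi a xs ` factors bb (count_list xs b))"
      by (intro UN_I[of "factor_at u i n"] factor_in_factors) (auto intro: imageI factor_in_factors)
  qed
  then have "card (factors v n) \<le> card (\<Union>xs\<in>factors u n. psi a xs ` factors bb (count_list xs b))"
    by (intro card_mono) (use finu finb in auto)
  also have "\<dots> \<le> (\<Sum>xs\<in>factors u n. card (psi a xs ` factors bb (count_list xs b)))"
    by (rule card_UN_le[OF finu])
  also have "\<dots> \<le> (\<Sum>xs\<in>factors u n. count_list xs b + 1)"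
  proof (rule sum_mono)
    fix xs
    have "card (psi a xs ` factors bb (count_list xs b)) \<le> card (factors bb (count_list xs b))"
      by (rule card_image_le[OF finb])
    also have "\<dots> \<le> count_list xs b + 1"
      by (rule balanced_complexity[of 2 3]) (use rbb balb in auto)
    finally show "card (psi a xs ` factors bb (count_list xs b)) \<le> count_list xs b + 1" .
  qed
  finally show ?thesis .
qed

end

lemma irr_mult_nat:
  assumes "\<alpha> \<notin> \<rat>" "n \<ge> 1"
  shows "real n * \<alpha> \<notin> \<int>"
proof
  assume "real n * \<alpha> \<in> \<int>"
  then obtain k where "real n * \<alpha> = of_int k" by (auto elim: Ints_cases)
  then have "\<alpha> = of_int k / real n" using assms(2) by (simp add: field_simps)
  then have "\<alpha> \<in> \<rat>" by simp
  with assms(1) show False by simp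
qed

lemma cnt_ceiling:
  fixes c :: nat and x :: real
  assumes "\<bar>real c - x\<bar> \<le> 1" "x \<notin> \<int>"
  shows "int c = \<lceil>x\<rceil> \<or> int c = \<lceil>x\<rceil> - 1"
proof -
  have "real c \<noteq> x + 1" "real c \<noteq> x - 1"
  proof -
    show "real c \<noteq> x + 1"
    proof
      assume "real c = x + 1" then have "x = of_int (int c - 1)" by simp
      with assms(2) show False by (metis Ints_of_int)
    qed
    show "real c \<noteq> x - 1"
    proof
      assume "real c = x - 1" then have "x = of_int (int c + 1)" by simp
      with assms(2) show False by (metis Ints_of_int)
    qed
  qed
  then have "x - 1 < real c" "real c < x + 1" using assms(1) by (auto simp: abs_le_iff)
  then have "\<lceil>x\<rceil> \<le> int c + 1" "int c \<le> \<lceil>x\<rceil>"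
    by (auto simp: ceiling_le_iff le_ceiling_iff)
  then show ?thesis by auto
qed

locale colfreq = colsetup u a b bb for u :: "nat \<Rightarrow> 'a" and a b bb +
  fixes \<alpha> :: real
  assumes fu: "(\<lambda>n. real (cnt u b 0 n) / real n) \<longlonglongrightarrow> \<alpha>"
    and irr: "\<alpha> \<notin> \<rat>" and a0: "0 < \<alpha>" and a1: "\<alpha> < 1"
begin

lemma cnt_b_ceil:
  assumes "n \<ge> 1"
  shows "int (cnt u b i n) = \<lceil>real n * \<alpha>\<rceil> \<or> int (cnt u b i n) = \<lceil>real n * \<alpha>\<rceil> - 1"
  by (rule cnt_ceiling[OF freqA[OF balu fu] irr_mult_nat[OF irr assms]])

lemma complexity_bound:
  assumes n: "n \<ge> 1"
  shows "int (factor_complexity v n) \<le> int (P_alpha u a b \<alpha> n) + (int n + 1) * \<lceil>real n * \<alpha>\<rceil>"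
proof -
  define K where "K = nat \<lceil>real n * \<alpha>\<rceil>"
  have Kpos: "\<lceil>real n * \<alpha>\<rceil> \<ge> 1"
  proof -
    have "real n * \<alpha> > 0" using n a0 by simp
    then show ?thesis by linarith
  qed
  have K: "int K = \<lceil>real n * \<alpha>\<rceil>" using Kpos by (simp add: K_def)
  have finu: "finite (factors u n)" by (rule factors_finite[of u "{a,b}"]) (use ru in auto)
  define S where "S = {xs \<in> factors u n. count_list xs b = K}"
  have cnt_each: "count_list xs b + 1 = K + (if count_list xs b = K then 1 else 0)"
    if xsF: "xs \<in> factors u n" for xs
  proof -
    obtain i where "xs = factor_at u i n" using xsF by (auto simp: factors_iff)
    then have "count_list xs b = cnt u b i n" by (simp add: cnt_def)
    with cnt_b_ceil[OF n, of i] K show ?thesis by auto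
  qed
  have "card (factors v n) \<le> (\<Sum>xs\<in>factors u n. count_list xs b + 1)"
    by (rule v_complexity_sum)
  also have "\<dots> = (\<Sum>xs\<in>factors u n. K + (if count_list xs b = K then 1 else 0))"
    by (rule sum.cong) (use cnt_each in auto)
  also have "\<dots> = card (factors u n) * K + card S"
    by (simp add: sum.distrib S_def sum.If_cases finu Int_def conj_commute)
  finally have A: "card (factors v n) \<le> card (factors u n) * K + card S" .
  have B: "card (factors u n) \<le> n + 1"
    by (rule balanced_complexity[OF ab]) (use ru balu in auto)
  have C: "S = {w \<in> factors u n. int (count_list w a) = \<lfloor>(1 - \<alpha>) * real n\<rfloor> \<and> int (count_list w b) = \<lceil>real n * \<alpha>\<rceil>}"
  proof -
    have "int (count_list w a) = \<lfloor>(1 - \<alpha>) * real n\<rfloor> \<and> int (count_list w b) = \<lceil>real n * \<alpha>\<rceil>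
          \<longleftrightarrow> count_list w b = K" if wF: "w \<in> factors u n" for w
    proof -
      obtain i where w: "w = factor_at u i n" using wF by (auto simp: factors_iff)
      have ca: "count_list w a = n - count_list w b"
        using cnt_ua[of i n] by (simp add: w cnt_def)
      have cb: "count_list w b \<le> n" using cnt_le[of u b i n] by (simp add: w cnt_def)
      have fl: "\<lfloor>(1 - \<alpha>) * real n\<rfloor> = int n - \<lceil>real n * \<alpha>\<rceil>"
      proof -
        have "(1 - \<alpha>) * real n = - (real n * \<alpha>) + of_int (int n)" by (simp add: algebra_simps)
        then have "\<lfloor>(1 - \<alpha>) * real n\<rfloor> = \<lfloor>- (real n * \<alpha>)\<rfloor> + int n"
          by (metis floor_add_int)
        then show ?thesis by (simp add: ceiling_def)
      qed
      show ?thesis using ca cb fl K by auto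
    qed
    then show ?thesis unfolding S_def by auto
  qed
  have "int (card (factors v n)) \<le> int (card S) + (int n + 1) * int K"
  proof -
    have "card (factors u n) * K \<le> (n+1) * K" using B by (rule mult_right_mono) simp
    with A have "card (factors v n) \<le> card S + (n+1) * K" by linarith
    then have "int (card (factors v n)) \<le> int (card S + (n+1) * K)" by linarith
    then show ?thesis by (simp add: algebra_simps)
  qed
  then show ?thesis unfolding factor_complexity_def P_alpha_def C[symmetric] K .
qed

end

lemma lift_close:
  fixes G y z c \<epsilon> :: real
  assumes "c \<le> G" "G \<le> c + 1" "G - y \<in> \<int>" "\<bar>y - z\<bar> < \<epsilon>" "c + \<epsilon> \<le> z" "z \<le> c + 1 - \<epsilon>"
  shows "\<bar>G - z\<bar> < \<epsilon>"
proof -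
  obtain n where n: "G - y = of_int n" using assms(3) by (auto elim: Ints_cases)
  have "c < y" "y < c + 1" using assms by (auto simp: abs_less_iff)
  then have "-1 < real_of_int n" "real_of_int n < 1" using n assms(1,2) by linarith+
  then have "n = 0" by linarith
  with n have "G = y" by simp
  with assms(4) show ?thesis by simp
qed

lemma osc_bounds:
  fixes G :: "nat \<Rightarrow> real"
  assumes "\<And>i j. \<bar>G i - G j\<bar> \<le> 1"
  shows "Inf (range G) \<le> G i \<and> G i \<le> Inf (range G) + 1"
proof -
  have l: "G 0 - 1 \<le> G j" for j using assms[of 0 j] by (simp add: abs_le_iff)
  have bdd: "bdd_below (range G)"
    by (rule bdd_belowI[of _ "G 0 - 1"]) (use l in auto)
  have "Inf (range G) \<le> G i" by (rule cInf_lower[OF _ bdd]) auto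
  moreover have "G i - 1 \<le> Inf (range G)"
  proof (rule cInf_greatest)
    show "\<And>x. x \<in> range G \<Longrightarrow> G i - 1 \<le> x"
    proof -
      fix x assume "x \<in> range G" then obtain j where "x = G j" by auto
      then show "G i - 1 \<le> x" using assms[of i j] by (simp add: abs_le_iff)
    qed
  qed auto
  ultimately show ?thesis by simp
qed

lemma dens1:
  fixes f z \<epsilon> :: real and K0 m :: nat
  assumes "f \<notin> \<rat>" "m > 0" "\<epsilon> > 0"
  shows "\<exists>k h. k > 0 \<and> \<bar>- (f * real (K0 + m * k)) - of_int h - z\<bar> < \<epsilon>"
proof -
  have th: "- (real m * f) \<notin> \<rat>"
  proof
    assume "- (real m * f) \<in> \<rat>"
    then have "- (- (real m * f)) / real m \<in> \<rat>" by (intro Rats_divide) (simp_all add: Rats_minus_iff)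
    moreover have "- (- (real m * f)) / real m = f" using assms(2) by simp
    ultimately show False using assms(1) by simp
  qed
  define t where "t = frac (z + f * real K0)"
  have t01: "0 \<le> t" "t \<le> 1" unfolding t_def by (auto simp: frac_lt_1 less_imp_le)
  obtain k where k: "k > 0" "\<bar>frac (real k * (- (real m * f))) - t\<bar> < \<epsilon>"
    using Kronecker_approx_1_explicit[OF th t01 assms(3)] by blast
  define h where "h = \<lfloor>real k * (- (real m * f))\<rfloor> - \<lfloor>z + f * real K0\<rfloor>"
  have "- (f * real (K0 + m * k)) - of_int h - z = frac (real k * (- (real m * f))) - t"
    unfolding h_def t_def frac_def by (simp add: algebra_simps)
  with k show ?thesis by (intro exI[of _ k] exI[of _ h]) simp
qed

lemma half_contra:
  fixes G1 Gx :: "nat \<Rightarrow> real" and f1 :: real and K :: nat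
  assumes int1: "\<And>i. G1 i + f1 * real i \<in> \<int>" and irr: "f1 \<notin> \<rat>"
    and o1: "\<And>i j. \<bar>G1 i - G1 j\<bar> \<le> 1"
    and per: "\<And>i. i \<ge> K \<Longrightarrow> Gx (i + 2) = Gx i"
    and half: "\<bar>Gx (K+1) - Gx K\<bar> = 1/2"
  shows "\<exists>i j. \<bar>(G1 i + Gx i) - (G1 j + Gx j)\<bar> > 1"
proof -
  define c where "c = Inf (range G1)"
  have cb: "c \<le> G1 i" "G1 i \<le> c + 1" for i using osc_bounds[of G1, OF o1] unfolding c_def by auto
  have perk: "Gx (K' + 2 * k) = Gx K'" if "K' \<ge> K" for K' k
    by (induction k) (use per that in \<open>auto simp: add.assoc[symmetric]\<close>)
  define \<epsilon> :: real where "\<epsilon> = 1/10"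
  have close: "\<exists>i. Gx i = Gx K' \<and> \<bar>G1 i - z\<bar> < \<epsilon>" if "K' \<ge> K" "c + \<epsilon> \<le> z" "z \<le> c + 1 - \<epsilon>" for K' z
  proof -
    obtain k h where kh: "k > 0" "\<bar>- (f1 * real (K' + 2 * k)) - of_int h - z\<bar> < \<epsilon>"
      using dens1[OF irr, of 2 \<epsilon> K' z] by (auto simp: \<epsilon>_def)
    let ?i = "K' + 2 * k"
    have "G1 ?i - (- (f1 * real ?i) - of_int h) \<in> \<int>"
    proof -
      have "G1 ?i - (- (f1 * real ?i) - of_int h) = (G1 ?i + f1 * real ?i) + of_int h" by simp
      also have "\<dots> \<in> \<int>" using int1[of ?i] by simp
      finally show ?thesis .
    qed
    then have "\<bar>G1 ?i - z\<bar> < \<epsilon>" by (rule lift_close[OF cb(1) cb(2) _ kh(2) that(2,3)])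
    then show ?thesis using perk[OF that(1)] by blast
  qed
  obtain i0 where i0: "Gx i0 = Gx K" "\<bar>G1 i0 - (c + 1/2 - 4/10)\<bar> < \<epsilon>"
    using close[of K "c + 1/2 - 4/10"] by (auto simp: \<epsilon>_def)
  obtain i1 where i1: "Gx i1 = Gx K" "\<bar>G1 i1 - (c + 1/2 + 4/10)\<bar> < \<epsilon>"
    using close[of K "c + 1/2 + 4/10"] by (auto simp: \<epsilon>_def)
  obtain j0 where j0: "Gx j0 = Gx (K+1)" "\<bar>G1 j0 - (c + 1/2 - 4/10)\<bar> < \<epsilon>"
    using close[of "K+1" "c + 1/2 - 4/10"] by (auto simp: \<epsilon>_def)
  obtain j1 where j1: "Gx j1 = Gx (K+1)" "\<bar>G1 j1 - (c + 1/2 + 4/10)\<bar> < \<epsilon>"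
    using close[of "K+1" "c + 1/2 + 4/10"] by (auto simp: \<epsilon>_def)
  show ?thesis
  proof (cases "Gx (K+1) = Gx K + 1/2")
    case True
    then have "(G1 j1 + Gx j1) - (G1 i0 + Gx i0) > 1" using i0 j1 unfolding \<epsilon>_def abs_less_iff by linarith
    then show ?thesis by (intro exI[of _ j1] exI[of _ i0]) simp
  next
    case False
    then have "Gx (K+1) = Gx K - 1/2" using half by (auto simp: abs_if split: if_splits)
    then have "(G1 i1 + Gx i1) - (G1 j0 + Gx j0) > 1" using i1 j0 unfolding \<epsilon>_def abs_less_iff by linarith
    then show ?thesis by (intro exI[of _ i1] exI[of _ j0]) simp
  qed
qed

lemma approx_dep:
  fixes f1 f3 z1 z3 \<epsilon> :: real and P Q R :: int
  assumes irr: "f1 \<notin> \<rat>" and rel: "of_int P * f1 + of_int Q * f3 = of_int R"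
    and prim: "gcd (gcd P Q) R = 1" and nz: "P \<noteq> 0 \<or> Q \<noteq> 0"
    and zin: "of_int P * z1 + of_int Q * z3 \<in> \<int>" and eps: "\<epsilon> > 0"
  shows "\<exists>i::nat. \<exists>h1 h3::int. \<bar>- (f1 * real i) - of_int h1 - z1\<bar> < \<epsilon> \<and> \<bar>- (f3 * real i) - of_int h3 - z3\<bar> < \<epsilon>"
proof -
  define g where "g = gcd P Q"
  have gpos: "g > 0" using nz unfolding g_def by auto
  obtain P' where P': "P = g * P'" unfolding g_def by (meson gcd_dvd1 dvdE)
  obtain Q' where Q': "Q = g * Q'" unfolding g_def by (meson gcd_dvd2 dvdE)
  have gg: "gcd (g*P') (g*Q') = g" by (simp only: P'[symmetric] Q'[symmetric]) (simp add: g_def)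
  have "g * gcd P' Q' = g * 1"
    using gcd_mult_distrib_int[of g P' Q'] gpos gg by simp
  then have cop: "gcd P' Q' = 1" using gpos by simp
  obtain u w where uw: "u * P' + w * Q' = 1" using bezout_int[of P' Q'] cop by auto
  have gR: "gcd g R = 1" using prim unfolding g_def .
  obtain a c where ac: "a * R + c * g = 1" using bezout_int[of R g] gR by (auto simp: gcd.commute)
  obtain N where N: "of_int P * z1 + of_int Q * z3 = of_int N" using zin by (auto elim: Ints_cases)
  define j0 where "j0 = nat ((- a * N) mod g)"
  have j0i: "int j0 = (- a * N) mod g" unfolding j0_def using gpos by simp
  have gdvd: "g dvd (R * int j0 + N)"
  proof -
    have "(R * ((- a * N) mod g) + N) mod g = (R * (- a * N) + N) mod g"
      by (metis mod_add_left_eq mod_mult_right_eq)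
    moreover have "R * (- a * N) + N = g * (c * N)"
    proof -
      have "1 - a * R = c * g" using ac by linarith
      have "R * (- a * N) + N = N * (1 - a * R)" by (simp add: algebra_simps)
      also have "\<dots> = g * (c * N)" by (simp only: \<open>1 - a * R = c * g\<close>) (simp add: algebra_simps)
      finally show ?thesis .
    qed
    ultimately have "(R * int j0 + N) mod g = 0" using j0i by simp
    then show ?thesis by (simp add: dvd_eq_mod_eq_0)
  qed
  define \<eta> where "\<eta> = of_int w * f1 - of_int u * f3"
  define r where "r = of_int P' * f1 + of_int Q' * f3"
  have rR: "of_int g * r = of_int R" using rel unfolding r_def P' Q' by (simp add: algebra_simps)
  have uw': "of_int u * of_int P' + of_int w * of_int Q' = (1::real)"
    using arg_cong[OF uw, of real_of_int] by simp
  have f1id: "f1 = of_int Q' * \<eta> + of_int u * r"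
  proof -
    have "of_int Q' * \<eta> + of_int u * r = f1 * (of_int u * of_int P' + of_int w * of_int Q')"
      unfolding \<eta>_def r_def by (simp add: algebra_simps)
    then show ?thesis using uw' by simp
  qed
  have f3id: "f3 = - of_int P' * \<eta> + of_int w * r"
  proof -
    have "- of_int P' * \<eta> + of_int w * r = f3 * (of_int u * of_int P' + of_int w * of_int Q')"
      unfolding \<eta>_def r_def by (simp add: algebra_simps)
    then show ?thesis using uw' by simp
  qed
  have eta_irr: "\<eta> \<notin> \<rat>"
  proof
    assume "\<eta> \<in> \<rat>"
    moreover have "r \<in> \<rat>"
    proof -
      have "r = of_int R / of_int g" using rR gpos by (simp add: field_simps)
      then show ?thesis by simp
    qed
    ultimately have "of_int Q' * \<eta> + of_int u * r \<in> \<rat>" by simp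
    then show False using irr f1id by simp
  qed
  define sz where "sz = of_int w * z1 - of_int u * z3"
  define tz where "tz = of_int P' * z1 + of_int Q' * z3"
  have tzN: "of_int g * tz = of_int N" using N unfolding tz_def P' Q' by (simp add: algebra_simps)
  have z1id: "z1 = of_int Q' * sz + of_int u * tz"
  proof -
    have "of_int Q' * sz + of_int u * tz = z1 * (of_int u * of_int P' + of_int w * of_int Q')"
      unfolding sz_def tz_def by (simp add: algebra_simps)
    then show ?thesis using uw' by simp
  qed
  have z3id: "z3 = - of_int P' * sz + of_int w * tz"
  proof -
    have "- of_int P' * sz + of_int w * tz = z3 * (of_int u * of_int P' + of_int w * of_int Q')"
      unfolding sz_def tz_def by (simp add: algebra_simps)
    then show ?thesis using uw' by simp
  qed
  define \<delta> where "\<delta> = \<epsilon> / (\<bar>of_int P'\<bar> + \<bar>of_int Q'\<bar> + 1)"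
  have dpos: "\<delta> > 0" unfolding \<delta>_def using eps by (simp add: add_pos_nonneg)
  obtain k h where kh: "k > 0" "\<bar>- (\<eta> * real (j0 + nat g * k)) - of_int h - sz\<bar> < \<delta>"
    using dens1[OF eta_irr _ dpos, of "nat g" j0 sz] gpos by auto
  define i where "i = j0 + nat g * k"
  define e where "e = - (\<eta> * real i) - of_int h - sz"
  have e: "\<bar>e\<bar> < \<delta>" using kh unfolding e_def i_def by simp
  obtain M where M: "R * int i + N = g * M"
  proof -
    have "R * int i + N = (R * int j0 + N) + g * (R * int k)"
      unfolding i_def using gpos by (simp add: algebra_simps)
    moreover obtain M0 where "R * int j0 + N = g * M0" using gdvd by (auto elim: dvdE)
    ultimately have "R * int i + N = g * (M0 + R * int k)" by (simp add: algebra_simps)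
    then show thesis by (rule that)
  qed
  have rM: "r * real i + tz = of_int M"
  proof -
    have "of_int g * (r * real i + tz) = of_int R * real i + of_int N"
      using rR tzN by (simp add: algebra_simps)
    also have "\<dots> = of_int g * of_int M" using arg_cong[OF M, of real_of_int] by simp
    finally show ?thesis using gpos by simp
  qed
  have x: "- (f1 * real i) - of_int (Q' * h - u * M) - z1 = of_int Q' * e"
  proof -
    have "- (f1 * real i) - z1 = of_int Q' * (- (\<eta> * real i) - sz) - of_int u * (r * real i + tz)"
      by (subst f1id, subst z1id) (simp add: algebra_simps)
    then show ?thesis unfolding e_def rM by (simp add: algebra_simps)
  qed
  have y: "- (f3 * real i) - of_int (- P' * h - w * M) - z3 = - of_int P' * e"
  proof -
    have "- (f3 * real i) - z3 = - of_int P' * (- (\<eta> * real i) - sz) - of_int w * (r * real i + tz)"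
      by (subst f3id, subst z3id) (simp add: algebra_simps)
    then show ?thesis unfolding e_def rM by (simp add: algebra_simps)
  qed
  have bnd: "\<bar>of_int K * e\<bar> < \<epsilon>" if "K = P' \<or> K = Q'" for K
  proof -
    have "\<bar>of_int K * e\<bar> = \<bar>of_int K\<bar> * \<bar>e\<bar>" by (simp add: abs_mult)
    also have "\<dots> \<le> (\<bar>of_int P'\<bar> + \<bar>of_int Q'\<bar>) * \<bar>e\<bar>"
      using that by (intro mult_right_mono) auto
    also have "\<dots> < (\<bar>of_int P'\<bar> + \<bar>of_int Q'\<bar> + 1) * \<delta>"
    proof -
      have "(\<bar>of_int P'\<bar> + \<bar>of_int Q'\<bar>) * \<bar>e\<bar> \<le> (\<bar>of_int P'\<bar> + \<bar>of_int Q'\<bar>) * \<delta>"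
        using e by (intro mult_left_mono) auto
      also have "\<dots> < (\<bar>of_int P'\<bar> + \<bar>of_int Q'\<bar> + 1) * \<delta>" using dpos by (simp add: algebra_simps)
      finally show ?thesis .
    qed
    also have "\<dots> = \<epsilon>" unfolding \<delta>_def by (simp add: add_pos_nonneg)
    finally show ?thesis .
  qed
  show ?thesis
    using x y bnd[of Q'] bnd[of P']
    by (intro exI[of _ i] exI[of _ "Q' * h - u * M"] exI[of _ "- P' * h - w * M"]) (simp add: abs_minus_commute)
qed

lemma pos_fix:
  fixes f1 f3 y1 y3 \<epsilon> :: real and k m1 m3 :: int
  assumes "\<bar>of_int k * f1 - of_int m1 - y1\<bar> < \<epsilon>/2" "\<bar>of_int k * f3 - of_int m3 - y3\<bar> < \<epsilon>/2" "\<epsilon> > 0"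
  shows "\<exists>i::nat. \<exists>n1 n3::int. \<bar>real i * f1 - of_int n1 - y1\<bar> < \<epsilon> \<and> \<bar>real i * f3 - of_int n3 - y3\<bar> < \<epsilon>"
proof -
  define N :: nat where "N = nat \<lceil>2 * \<bar>of_int k\<bar> / \<epsilon>\<rceil> + 1"
  have Npos: "N > 0" unfolding N_def by simp
  define \<theta> :: "nat \<Rightarrow> real" where "\<theta> j = (if j = 0 then f1 else f3)" for j
  obtain q p where qp: "0 < q" "\<And>j. j < 2 \<Longrightarrow> \<bar>of_int q * \<theta> j - of_int (p j)\<bar> < 1/N"
    using Dirichlet_approx_simult[OF Npos, of 2 \<theta>] by metis
  have q1: "\<bar>of_int q * f1 - of_int (p 0)\<bar> < 1/N" using qp(2)[of 0] by (simp add: \<theta>_def)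
  have q3: "\<bar>of_int q * f3 - of_int (p 1)\<bar> < 1/N" using qp(2)[of 1] by (simp add: \<theta>_def)
  have kN: "\<bar>real_of_int k\<bar> / N < \<epsilon>/2"
  proof -
    have "2 * \<bar>of_int k\<bar> / \<epsilon> < real N" unfolding N_def by linarith
    then have "2 * \<bar>of_int k\<bar> < real N * \<epsilon>" using assms(3) by (simp add: field_simps)
    then show ?thesis using Npos by (simp add: field_simps)
  qed
  define i where "i = nat (k + q * \<bar>k\<bar>)"
  have inn: "k + q * \<bar>k\<bar> \<ge> 0"
  proof -
    have "q * \<bar>k\<bar> \<ge> \<bar>k\<bar>" using qp(1) by (simp add: mult_le_cancel_right1)
    then show ?thesis by linarith
  qed
  have ri: "real i = of_int k + of_int q * \<bar>of_int k\<bar>" unfolding i_def using inn by simp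
  have gen: "\<bar>real i * f - of_int (m + \<bar>k\<bar> * pp) - y\<bar> < \<epsilon>"
    if "\<bar>of_int k * f - of_int m - y\<bar> < \<epsilon>/2" "\<bar>of_int q * f - of_int pp\<bar> < 1/N" for f m pp y
  proof -
    have "real i * f - of_int (m + \<bar>k\<bar> * pp) - y = (of_int k * f - of_int m - y) + \<bar>of_int k\<bar> * (of_int q * f - of_int pp)"
      unfolding ri by (simp add: algebra_simps)
    moreover have "\<bar>\<bar>of_int k\<bar> * (of_int q * f - of_int pp)\<bar> \<le> \<bar>of_int k\<bar> / N"
    proof -
      have "\<bar>\<bar>of_int k\<bar> * (of_int q * f - of_int pp)\<bar> = \<bar>of_int k\<bar> * \<bar>of_int q * f - of_int pp\<bar>"
        by (simp add: abs_mult)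
      also have "\<dots> \<le> \<bar>of_int k\<bar> * (1/N)" using that(2) by (intro mult_left_mono) auto
      finally show ?thesis by simp
    qed
    ultimately show ?thesis using that(1) kN by linarith
  qed
  show ?thesis using gen[OF assms(1) q1] gen[OF assms(2) q3] by blast
qed

lemma approx_indep:
  fixes f1 f3 z1 z3 \<epsilon> :: real
  assumes noRel: "\<And>P Q R::int. of_int P * f1 + of_int Q * f3 = of_int R \<Longrightarrow> P = 0 \<and> Q = 0"
    and eps: "\<epsilon> > 0"
  shows "\<exists>i::nat. \<exists>h1 h3::int. \<bar>- (f1 * real i) - of_int h1 - z1\<bar> < \<epsilon> \<and> \<bar>- (f3 * real i) - of_int h3 - z3\<bar> < \<epsilon>"
proof -
  interpret M: Modules.module "(\<lambda>r. (*) (real_of_int r))"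
    by (simp add: Modules.module.intro distrib_left mult.commute)
  define \<theta> :: "nat \<Rightarrow> real" where "\<theta> j = (if j = 0 then f1 else if j = 1 then f3 else 1)" for j
  have n13: "f1 \<noteq> f3" using noRel[of 1 "-1" 0] by auto
  have n1: "f1 \<noteq> 1" using noRel[of 1 0 1] by auto
  have n3: "f3 \<noteq> 1" using noRel[of 0 1 1] by auto
  have img: "\<theta> ` {..2} = {f1, f3, 1}"
  proof -
    have "{..2::nat} = {0,1,2}" by auto
    then show ?thesis by (auto simp: \<theta>_def)
  qed
  have inj: "inj_on \<theta> {..2}"
  proof -
    have "{..2::nat} = {0,1,2}" by auto
    then show ?thesis using n13 n1 n3 by (auto simp: inj_on_def \<theta>_def)
  qed
  have indep: "\<not> M.dependent (\<theta> ` {..2})"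
  proof
    assume "M.dependent (\<theta> ` {..2})"
    then obtain t U where tU: "finite t" "t \<subseteq> {f1, f3, 1}" "(\<Sum>v\<in>t. real_of_int (U v) * v) = 0" "\<exists>v\<in>t. U v \<noteq> 0"
      unfolding M.dependent_explicit img by blast
    define U' where "U' v = (if v \<in> t then U v else 0)" for v
    have "(\<Sum>v\<in>{f1, f3, 1}. real_of_int (U' v) * v) = (\<Sum>v\<in>t. real_of_int (U' v) * v)"
      by (rule sum.mono_neutral_right) (use tU in \<open>auto simp: U'_def\<close>)
    also have "\<dots> = 0" using tU(3) by (simp add: U'_def)
    finally have "real_of_int (U' f1) * f1 + real_of_int (U' f3) * f3 + real_of_int (U' 1) = 0"
      using n13 n1 n3 by (simp add: add.assoc)
    then have "real_of_int (U' f1) * f1 + real_of_int (U' f3) * f3 = real_of_int (- U' 1)" by simp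
    from noRel[OF this] have z13: "U' f1 = 0" "U' f3 = 0" by auto
    with \<open>real_of_int (U' f1) * f1 + real_of_int (U' f3) * f3 + real_of_int (U' 1) = 0\<close>
    have z1: "U' 1 = 0" by simp
    from tU(4) obtain v where "v \<in> t" "U v \<noteq> 0" by blast
    then show False using tU(2) z13 z1 by (auto simp: U'_def)
  qed
  define y :: "nat \<Rightarrow> real" where "y j = (if j = 0 then - z1 else - z3)" for j
  have e2: "\<epsilon>/2 > 0" using eps by simp
  obtain k m where km: "\<And>j. j < 2 \<Longrightarrow> \<bar>of_int k * \<theta> j - of_int (m j) - y j\<bar> < \<epsilon>/2"
    using Kronecker_thm_2[OF indep inj _ e2, of y] by (auto simp: \<theta>_def)
  have k1: "\<bar>of_int k * f1 - of_int (m 0) - (- z1)\<bar> < \<epsilon>/2" using km[of 0] by (simp add: \<theta>_def y_def)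
  have k3: "\<bar>of_int k * f3 - of_int (m 1) - (- z3)\<bar> < \<epsilon>/2" using km[of 1] by (simp add: \<theta>_def y_def)
  obtain i n1 n3 where i: "\<bar>real i * f1 - of_int n1 - (- z1)\<bar> < \<epsilon>" "\<bar>real i * f3 - of_int n3 - (- z3)\<bar> < \<epsilon>"
    using pos_fix[OF k1 k3 eps] by blast
  have "\<bar>- (f1 * real i) - of_int (- n1) - z1\<bar> = \<bar>real i * f1 - of_int n1 - (- z1)\<bar>"
    by (simp add: abs_minus_commute algebra_simps)
  moreover have "\<bar>- (f3 * real i) - of_int (- n3) - z3\<bar> = \<bar>real i * f3 - of_int n3 - (- z3)\<bar>"
    by (simp add: abs_minus_commute algebra_simps)
  ultimately show ?thesis using i by metis
qed

lemma edge_helper: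
  fixes X Y \<tau> y :: real
  assumes "X \<noteq> 0" "0 \<le> \<tau>/X" "\<tau>/X \<le> 1" "y = (X + Y) * (1/40) + 11/30 * \<tau>"
  shows "\<exists>s t. 1/40 \<le> s \<and> 1/40 \<le> t \<and> s + t \<le> 5/12 \<and> (X * s) + (Y * t) = y \<and> (Y * t) + (X * s) = y"
proof -
  define s where "s = 1/40 + 11/30 * (\<tau>/X)"
  have "X * s = X/40 + 11/30 * \<tau>" unfolding s_def using assms(1) by (simp add: field_simps)
  then have "(X * s) + (Y * (1/40)) = y" using assms(4) by (simp add: algebra_simps)
  moreover have "1/40 \<le> s" "s + 1/40 \<le> 5/12" unfolding s_def using assms(2,3) by auto
  ultimately show ?thesis by (intro exI[of _ s] exI[of _ "1/40"]) auto
qed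

lemma find_point:
  fixes P Q :: int and \<mu> :: real
  assumes W: "max 0 (max P Q) - min 0 (min P Q) \<ge> 3"
  shows "\<exists>s t. 1/40 \<le> s \<and> 1/40 \<le> t \<and> s + t \<le> 5/12 \<and> of_int P * s + of_int Q * t - \<mu> \<in> \<int>"
proof -
  define \<epsilon> :: real where "\<epsilon> = 1/40"
  define D :: real where "D = 11/30"
  define m where "m = min 0 (min P Q)"
  define M where "M = max 0 (max P Q)"
  define v1 where "v1 = (of_int P + of_int Q) * \<epsilon>"
  define n where "n = \<lceil>v1 + D * of_int m - \<mu>\<rceil>"
  define y where "y = \<mu> + of_int n"
  have y1: "v1 + D * of_int m \<le> y" unfolding y_def n_def by linarith
  have y2: "y < v1 + D * of_int m + 1" unfolding y_def n_def by linarith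
  have "of_int M - of_int m \<ge> (3::real)" using W unfolding M_def m_def by linarith
  then have "D * of_int m + 1 \<le> D * of_int M" unfolding D_def by linarith
  define \<tau> where "\<tau> = (y - v1) / D"
  have yt: "y = v1 + D * \<tau>" unfolding \<tau>_def D_def by (simp add: field_simps)
  have tm: "of_int m \<le> \<tau>" "\<tau> \<le> of_int M"
    using y1 y2 \<open>D * of_int m + 1 \<le> D * of_int M\<close> unfolding yt D_def by linarith+
  have key: "of_int P * s + of_int Q * t - \<mu> \<in> \<int>" if "of_int P * s + of_int Q * t = y" for s t
    using that unfolding y_def by simp
  have edge: "\<exists>s t. 1/40 \<le> s \<and> 1/40 \<le> t \<and> s + t \<le> 5/12 \<and> of_int P * s + of_int Q * t = y"
  proof -
    consider "\<tau> = 0" | "0 < \<tau> \<and> \<tau> \<le> of_int P" | "0 < \<tau> \<and> \<tau> \<le> of_int Q"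
      | "\<tau> < 0 \<and> of_int P \<le> \<tau>" | "\<tau> < 0 \<and> of_int Q \<le> \<tau>"
    proof -
      have "of_int M = (0::real) \<or> of_int M = of_int P \<or> of_int M = (of_int Q :: real)" unfolding M_def by auto
      moreover have "of_int m = (0::real) \<or> of_int m = of_int P \<or> of_int m = (of_int Q :: real)" unfolding m_def by auto
      ultimately show ?thesis using tm that by (smt (verit))
    qed
    then show ?thesis
    proof cases
      case 1
      then show ?thesis using yt unfolding v1_def \<epsilon>_def
        by (intro exI[of _ "1/40"] exI[of _ "1/40"]) (simp add: algebra_simps)
    next
      case 2
      then have "of_int P \<noteq> (0::real)" "0 \<le> \<tau> / of_int P" "\<tau> / of_int P \<le> 1" by (auto simp: field_simps)
      moreover have "y = (of_int P + of_int Q) * (1/40) + 11/30 * \<tau>" using yt unfolding v1_def \<epsilon>_def D_def by simp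
      ultimately obtain s t where st: "1/40 \<le> s" "1/40 \<le> t" "s + t \<le> 5/12" "of_int P * s + of_int Q * t = y"
        using edge_helper[where X="of_int P" and Y="of_int Q" and \<tau>=\<tau> and y=y] by blast
      then show ?thesis by blast
    next
      case 3
      then have "of_int Q \<noteq> (0::real)" "0 \<le> \<tau> / of_int Q" "\<tau> / of_int Q \<le> 1" by (auto simp: field_simps)
      moreover have "y = (of_int Q + of_int P) * (1/40) + 11/30 * \<tau>" using yt unfolding v1_def \<epsilon>_def D_def by simp
      ultimately obtain s t where st: "1/40 \<le> s" "1/40 \<le> t" "s + t \<le> 5/12" "of_int Q * s + of_int P * t = y"
        using edge_helper[where X="of_int Q" and Y="of_int P" and \<tau>=\<tau> and y=y] by blast
      then show ?thesis by (intro exI[of _ t] exI[of _ s]) (auto simp: algebra_simps)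
    next
      case 4
      then have "of_int P \<noteq> (0::real)" "0 \<le> \<tau> / of_int P" "\<tau> / of_int P \<le> 1" by (auto simp: field_simps)
      moreover have "y = (of_int P + of_int Q) * (1/40) + 11/30 * \<tau>" using yt unfolding v1_def \<epsilon>_def D_def by simp
      ultimately obtain s t where st: "1/40 \<le> s" "1/40 \<le> t" "s + t \<le> 5/12" "of_int P * s + of_int Q * t = y"
        using edge_helper[where X="of_int P" and Y="of_int Q" and \<tau>=\<tau> and y=y] by blast
      then show ?thesis by blast
    next
      case 5
      then have "of_int Q \<noteq> (0::real)" "0 \<le> \<tau> / of_int Q" "\<tau> / of_int Q \<le> 1" by (auto simp: field_simps)
      moreover have "y = (of_int Q + of_int P) * (1/40) + 11/30 * \<tau>" using yt unfolding v1_def \<epsilon>_def D_def by simp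
      ultimately obtain s t where st: "1/40 \<le> s" "1/40 \<le> t" "s + t \<le> 5/12" "of_int Q * s + of_int P * t = y"
        using edge_helper[where X="of_int Q" and Y="of_int P" and \<tau>=\<tau> and y=y] by blast
      then show ?thesis by (intro exI[of _ t] exI[of _ s]) (auto simp: algebra_simps)
    qed
  qed
  then show ?thesis using key by blast
qed

lemma small_cases:
  fixes P0 Q0 R0 :: int and f1 f3 :: real
  assumes rel0: "of_int P0 * f1 + of_int Q0 * f3 = of_int R0"
   and W: "max 0 (max P0 Q0) - min 0 (min P0 Q0) \<le> 2"
   and hP: "P0 = -2 \<or> P0 = -1 \<or> P0 = 0 \<or> P0 = 1 \<or> P0 = 2"
   and hQ: "Q0 = -2 \<or> Q0 = -1 \<or> Q0 = 1 \<or> Q0 = 2"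
   and hR: "R0 = -1 \<or> R0 = 0 \<or> R0 = 1"
   and pos: "0 < f1" "0 < f3" "f1 + f3 < 1"
  shows "f1 = f3 \<or> 2*f1 + f3 = 1 \<or> f1 + 2*f3 = 1 \<or> f3 = 1/2 \<or> f1 + f3 = 1/2"
  using hP hQ hR rel0 W pos
  by (elim disjE) (simp_all, linarith?)

lemma graham3:
  fixes G1 G3 :: "nat \<Rightarrow> real" and f1 f3 :: real
  assumes i1: "\<And>i. G1 i + f1 * real i \<in> \<int>" and i3: "\<And>i. G3 i + f3 * real i \<in> \<int>"
    and o1: "\<And>i j. \<bar>G1 i - G1 j\<bar> \<le> 1" and o3: "\<And>i j. \<bar>G3 i - G3 j\<bar> \<le> 1"
    and o2: "\<And>i j. \<bar>(G1 i + G3 i) - (G1 j + G3 j)\<bar> \<le> 1"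
    and irr: "f1 \<notin> \<rat>" and pos: "0 < f1" "0 < f3" "f1 + f3 < 1"
  shows "f1 = f3 \<or> 2*f1 + f3 = 1 \<or> f1 + 2*f3 = 1 \<or> f3 = 1/2 \<or> f1 + f3 = 1/2"
proof -
  define c1 where "c1 = Inf (range G1)"
  define c3 where "c3 = Inf (range G3)"
  have b1: "c1 \<le> G1 i" "G1 i \<le> c1 + 1" for i using osc_bounds[of G1, OF o1] unfolding c1_def by auto
  have b3: "c3 \<le> G3 i" "G3 i \<le> c3 + 1" for i using osc_bounds[of G3, OF o3] unfolding c3_def by auto
  have hit: "\<exists>i. \<bar>G1 i - z1\<bar> < \<epsilon> \<and> \<bar>G3 i - z3\<bar> < \<epsilon>"
    if ap: "\<exists>i::nat. \<exists>h1 h3::int. \<bar>- (f1 * real i) - of_int h1 - z1\<bar> < \<epsilon> \<and> \<bar>- (f3 * real i) - of_int h3 - z3\<bar> < \<epsilon>"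
      and z: "c1 + \<epsilon> \<le> z1" "z1 \<le> c1 + 1 - \<epsilon>" "c3 + \<epsilon> \<le> z3" "z3 \<le> c3 + 1 - \<epsilon>" for z1 z3 \<epsilon>
  proof -
    obtain i h1 h3 where ih: "\<bar>- (f1 * real i) - of_int h1 - z1\<bar> < \<epsilon>" "\<bar>- (f3 * real i) - of_int h3 - z3\<bar> < \<epsilon>"
      using ap by blast
    have "G1 i - (- (f1 * real i) - of_int h1) \<in> \<int>"
    proof -
      have "G1 i - (- (f1 * real i) - of_int h1) = (G1 i + f1 * real i) + of_int h1" by simp
      also have "\<dots> \<in> \<int>" using i1[of i] by simp
      finally show ?thesis .
    qed
    from lift_close[OF b1(1) b1(2) this ih(1) z(1,2)] have A: "\<bar>G1 i - z1\<bar> < \<epsilon>" .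
    have "G3 i - (- (f3 * real i) - of_int h3) \<in> \<int>"
    proof -
      have "G3 i - (- (f3 * real i) - of_int h3) = (G3 i + f3 * real i) + of_int h3" by simp
      also have "\<dots> \<in> \<int>" using i3[of i] by simp
      finally show ?thesis .
    qed
    from lift_close[OF b3(1) b3(2) this ih(2) z(3,4)] have B: "\<bar>G3 i - z3\<bar> < \<epsilon>" .
    from A B show ?thesis by blast
  qed
  have contra: False
    if hh: "\<exists>i. \<bar>G1 i - z1\<bar> < \<epsilon> \<and> \<bar>G3 i - z3\<bar> < \<epsilon>" "\<exists>j. \<bar>G1 j - z1'\<bar> < \<epsilon> \<and> \<bar>G3 j - z3'\<bar> < \<epsilon>"
      "(z1' + z3') - (z1 + z3) > 1 + 4 * \<epsilon>" for z1 z3 z1' z3' \<epsilon>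
  proof -
    obtain i j where "\<bar>G1 i - z1\<bar> < \<epsilon>" "\<bar>G3 i - z3\<bar> < \<epsilon>" "\<bar>G1 j - z1'\<bar> < \<epsilon>" "\<bar>G3 j - z3'\<bar> < \<epsilon>"
      using hh(1,2) by blast
    moreover note o2[of j i] hh(3)
    ultimately show False by (simp add: abs_less_iff abs_le_iff)
  qed
  show ?thesis
  proof (cases "\<exists>P Q R::int. of_int P * f1 + of_int Q * f3 = of_int R \<and> (P \<noteq> 0 \<or> Q \<noteq> 0)")
    case False
    then have noRel: "\<And>P Q R::int. of_int P * f1 + of_int Q * f3 = of_int R \<Longrightarrow> P = 0 \<and> Q = 0" by blast
    have e: "(1/20::real) > 0" by simp
    have h1: "\<exists>i. \<bar>G1 i - (c1 + 1/10)\<bar> < 1/20 \<and> \<bar>G3 i - (c3 + 1/10)\<bar> < 1/20"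
      by (rule hit[OF approx_indep[OF noRel e]]) auto
    have h2: "\<exists>i. \<bar>G1 i - (c1 + 9/10)\<bar> < 1/20 \<and> \<bar>G3 i - (c3 + 9/10)\<bar> < 1/20"
      by (rule hit[OF approx_indep[OF noRel e]]) auto
    from contra[OF h1 h2] show ?thesis by simp
  next
    case True
    then obtain P Q R :: int where rel: "of_int P * f1 + of_int Q * f3 = of_int R" and nz: "P \<noteq> 0 \<or> Q \<noteq> 0"
      by blast
    define d where "d = gcd (gcd P Q) R"
    have dpos: "d > 0" using nz unfolding d_def by auto
    obtain P0 where P0: "P = d * P0" unfolding d_def by (meson dvd_trans gcd_dvd1 dvdE)
    obtain Q0 where Q0: "Q = d * Q0" unfolding d_def by (meson dvd_trans gcd_dvd1 gcd_dvd2 dvdE)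
    obtain R0 where R0: "R = d * R0" unfolding d_def by (meson gcd_dvd2 dvdE)
    have prim: "gcd (gcd P0 Q0) R0 = 1"
    proof -
      have "d = gcd (gcd (d*P0) (d*Q0)) (d*R0)" by (simp only: P0[symmetric] Q0[symmetric] R0[symmetric]) (simp add: d_def)
      also have "gcd (d*P0) (d*Q0) = d * gcd P0 Q0" using gcd_mult_distrib_int[of d P0 Q0] dpos by simp
      also have "gcd (d * gcd P0 Q0) (d*R0) = d * gcd (gcd P0 Q0) R0"
        using gcd_mult_distrib_int[of d "gcd P0 Q0" R0] dpos by simp
      finally show ?thesis using dpos by simp
    qed
    have rel0: "of_int P0 * f1 + of_int Q0 * f3 = of_int R0"
    proof -
      have "of_int d * (of_int P0 * f1 + of_int Q0 * f3) = of_int d * (of_int R0 :: real)"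
        using rel unfolding P0 Q0 R0 by (simp add: algebra_simps)
      then show ?thesis using dpos by simp
    qed
    have nz0: "P0 \<noteq> 0 \<or> Q0 \<noteq> 0" using nz P0 Q0 by auto
    show ?thesis
    proof (cases "max 0 (max P0 Q0) - min 0 (min P0 Q0) \<ge> 3")
      case True
      obtain s t where st: "1/40 \<le> s" "1/40 \<le> t" "s + t \<le> 5/12"
        "of_int P0 * s + of_int Q0 * t - (- (of_int P0 * c1 + of_int Q0 * c3)) \<in> \<int>"
        using find_point[OF True] by blast
      obtain s' t' where st': "1/40 \<le> s'" "1/40 \<le> t'" "s' + t' \<le> 5/12"
        "of_int P0 * s' + of_int Q0 * t' - (of_int P0 * c1 + of_int Q0 * c3) \<in> \<int>"
        using find_point[OF True] by blast
      have e: "(1/40::real) > 0" by simp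
      have zin: "of_int P0 * (c1 + s) + of_int Q0 * (c3 + t) \<in> \<int>"
      proof -
        have "of_int P0 * (c1 + s) + of_int Q0 * (c3 + t) = of_int P0 * s + of_int Q0 * t - (- (of_int P0 * c1 + of_int Q0 * c3))"
          by (simp add: algebra_simps)
        then show ?thesis using st(4) by simp
      qed
      have zin': "of_int P0 * (c1 + 1 - s') + of_int Q0 * (c3 + 1 - t') \<in> \<int>"
      proof -
        have "of_int P0 * (c1 + 1 - s') + of_int Q0 * (c3 + 1 - t') = of_int (P0 + Q0) - (of_int P0 * s' + of_int Q0 * t' - (of_int P0 * c1 + of_int Q0 * c3))"
          by (simp add: algebra_simps)
        also have "\<dots> \<in> \<int>" using st'(4) by (intro Ints_diff[OF Ints_of_int])
        finally show ?thesis .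
      qed
      have h1: "\<exists>i. \<bar>G1 i - (c1 + s)\<bar> < 1/40 \<and> \<bar>G3 i - (c3 + t)\<bar> < 1/40"
        by (rule hit[OF approx_dep[OF irr rel0 prim nz0 zin e]]) (use st in auto)
      have h2: "\<exists>i. \<bar>G1 i - (c1 + 1 - s')\<bar> < 1/40 \<and> \<bar>G3 i - (c3 + 1 - t')\<bar> < 1/40"
        by (rule hit[OF approx_dep[OF irr rel0 prim nz0 zin' e]]) (use st' in auto)
      from contra[OF h1 h2] st st' show ?thesis by simp
    next
      case False
      then have W: "max 0 (max P0 Q0) - min 0 (min P0 Q0) \<le> 2" by simp
      then have Pb: "-2 \<le> P0" "P0 \<le> 2" and Qb: "-2 \<le> Q0" "Q0 \<le> 2" by auto
      have hP: "P0 = -2 \<or> P0 = -1 \<or> P0 = 0 \<or> P0 = 1 \<or> P0 = 2" using Pb by auto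
      have Q0nz: "Q0 \<noteq> 0"
      proof
        assume "Q0 = 0"
        then have "P0 \<noteq> 0" "of_int P0 * f1 = of_int R0" using nz0 rel0 by auto
        then have "f1 = of_int R0 / of_int P0" by (simp add: field_simps)
        then show False using irr by simp
      qed
      have hQ: "Q0 = -2 \<or> Q0 = -1 \<or> Q0 = 1 \<or> Q0 = 2" using Qb Q0nz by auto
      have Rb: "-2 < real_of_int R0" "real_of_int R0 < 2"
      proof -
        have p1: "(-2::real) \<le> of_int P0" "of_int P0 \<le> (2::real)" "(-2::real) \<le> of_int Q0" "of_int Q0 \<le> (2::real)"
          using Pb Qb by simp_all
        have "- 2 * f1 \<le> of_int P0 * f1" "of_int P0 * f1 \<le> 2 * f1"
          using mult_right_mono[OF p1(1), of f1] mult_right_mono[OF p1(2), of f1] pos by simp_all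
        moreover have "- 2 * f3 \<le> of_int Q0 * f3" "of_int Q0 * f3 \<le> 2 * f3"
          using mult_right_mono[OF p1(3), of f3] mult_right_mono[OF p1(4), of f3] pos by simp_all
        ultimately show "-2 < real_of_int R0" "real_of_int R0 < 2" using rel0 pos by linarith+
      qed
      then have hR: "R0 = -1 \<or> R0 = 0 \<or> R0 = 1" by auto
      show ?thesis by (rule small_cases[OF rel0 W hP hQ hR pos])
    qed
  qed
qed

lemma blocks_ge: "(\<And>i. cnt w x i 2 \<ge> 1) \<Longrightarrow> cnt w x r (2*l) \<ge> l"
proof (induction l)
  case (Suc l)
  have "cnt w x r (2 * Suc l) = cnt w x r (2*l) + cnt w x (r + 2*l) 2"
    by (metis cnt_add mult_Suc_right add.commute)
  moreover have "cnt w x r (2*l) \<ge> l" using Suc.IH Suc.prems by blast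
  moreover have "cnt w x (r + 2*l) 2 \<ge> 1" using Suc.prems by blast
  ultimately show ?case by simp
qed simp

lemma blocks_le: "(\<And>i. cnt w x i 2 \<le> 1) \<Longrightarrow> cnt w x r (2*l) \<le> l"
proof (induction l)
  case (Suc l)
  have "cnt w x r (2 * Suc l) = cnt w x r (2*l) + cnt w x (r + 2*l) 2"
    by (metis cnt_add mult_Suc_right add.commute)
  moreover have "cnt w x r (2*l) \<le> l" using Suc.IH Suc.prems by blast
  moreover have "cnt w x (r + 2*l) 2 \<le> 1" using Suc.prems by blast
  ultimately show ?case by simp
qed simp

lemma cnt_window3: "cnt w x p (2*(l+2)) = cnt w x p 2 + cnt w x (p+2) (2*l) + cnt w x (p + 2 + 2*l) 2"
proof -
  have "2*(l+2) = 2 + (2*l + 2)" by simp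
  then show ?thesis by (simp only: cnt_add add.assoc)
qed

lemma altlemma:
  assumes bal: "C_balanced 1 w" and fr: "(\<lambda>n. real (cnt w x 0 n) / real n) \<longlonglongrightarrow> 1/2"
  shows "\<exists>K. \<forall>i\<ge>K. cnt w x i 2 = 1"
proof (rule ccontr)
  assume "\<not> ?thesis"
  then have inf: "\<And>K. \<exists>i\<ge>K. cnt w x i 2 \<noteq> 1" by blast
  have fA: "\<bar>real (cnt w x i n) - real n * (1/2)\<bar> \<le> 1" for i n by (rule freqA[OF bal fr])
  obtain m where m: "{cnt w x i 2 | i. True} \<subseteq> {m, m+1}" using bal_cnt_set[OF bal] by blast
  have mm: "cnt w x i 2 = m \<or> cnt w x i 2 = m + 1" for i using m by blast
  obtain i1 where i1: "cnt w x i1 2 \<noteq> 1" using inf[of 0] by blast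
  obtain i2 where i2: "i2 \<ge> i1 + 2" "cnt w x i2 2 \<noteq> 1" using inf[of "i1+2"] by blast
  obtain i3 where i3: "i3 \<ge> i2 + 2" "cnt w x i3 2 \<noteq> 1" using inf[of "i2+2"] by blast
  have hlp: "\<exists>l. q = p + 2 + 2*l" if hq: "even (q - p)" "q \<ge> p + 2" for p q :: nat
  proof -
    obtain k where k: "q - p = 2*k" using hq(1) by (blast elim: evenE)
    then have "k \<ge> 1" using hq(2) by simp
    then show ?thesis using k hq(2) by (intro exI[of _ "k - 1"]) simp
  qed
  have i31: "i3 - i1 = (i3 - i2) + (i2 - i1)" using i2 i3 by simp
  have par: "even (i2 - i1) \<or> even (i3 - i2) \<or> even (i3 - i1)" unfolding i31 by auto
  obtain p l where pl: "cnt w x p 2 \<noteq> 1" "cnt w x (p + 2 + 2*l) 2 \<noteq> 1"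
  proof -
    from par consider "even (i2 - i1)" | "even (i3 - i2)" | "even (i3 - i1)" by blast
    then show ?thesis
    proof cases
      case 1
      then obtain l where "i2 = i1 + 2 + 2*l" using hlp i2(1) by blast
      then show ?thesis using that[of i1 l] i1 i2 by auto
    next
      case 2
      then obtain l where "i3 = i2 + 2 + 2*l" using hlp i3(1) by blast
      then show ?thesis using that[of i2 l] i2 i3 by auto
    next
      case 3
      have "i3 \<ge> i1 + 2" using i2 i3 by simp
      with 3 obtain l where "i3 = i1 + 2 + 2*l" using hlp by blast
      then show ?thesis using that[of i1 l] i1 i3 by auto
    qed
  qed
  have W: "real (cnt w x p (2*(l+2))) \<le> real (l+2) + 1" "real (l+2) - 1 \<le> real (cnt w x p (2*(l+2)))"
  proof -
    have h: "\<bar>real (cnt w x p (2*(l+2))) - real (2*(l+2)) * (1/2)\<bar> \<le> 1" by (rule fA)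
    have e: "real (2*(l+2)) * (1/2) = real (l+2)" by simp
    from h show "real (cnt w x p (2*(l+2))) \<le> real (l+2) + 1" "real (l+2) - 1 \<le> real (cnt w x p (2*(l+2)))"
      unfolding e abs_le_iff by linarith+
  qed
  show False
  proof (cases "m \<ge> 1")
    case True
    then have ge: "cnt w x i 2 \<ge> 1" for i using mm[of i] by auto
    have le2: "cnt w x i 2 \<le> 2" for i using cnt_le[of w x i 2] .
    have "cnt w x p 2 = 2" "cnt w x (p + 2 + 2*l) 2 = 2" using pl ge[of p] le2[of p] ge[of "p + 2 + 2*l"] le2[of "p + 2 + 2*l"]
      by linarith+
    moreover have "cnt w x (p+2) (2*l) \<ge> l" by (rule blocks_ge[OF ge])
    ultimately have "cnt w x p (2*(l+2)) \<ge> l + 4" unfolding cnt_window3 by simp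
    then show False using W(1) by simp
  next
    case False
    then have m0: "m = 0" by simp
    then have le: "cnt w x i 2 \<le> 1" for i using mm[of i] by auto
    have "cnt w x p 2 = 0" "cnt w x (p + 2 + 2*l) 2 = 0" using pl le[of p] le[of "p + 2 + 2*l"]
      by linarith+
    moreover have "cnt w x (p+2) (2*l) \<le> l" by (rule blocks_le[OF le])
    ultimately have "cnt w x p (2*(l+2)) \<le> l" unfolding cnt_window3 by simp
    then show False using W(2) by simp
  qed
qed

locale colfull = colfreq u a b bb \<alpha> for u :: "nat \<Rightarrow> 'a" and a b bb \<alpha> +
  fixes \<gamma> :: real
  assumes fb: "(\<lambda>m. real (cnt bb 3 0 m) / real m) \<longlonglongrightarrow> \<gamma>" and g0: "0 < \<gamma>" and g1: "\<gamma> < 1"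
    and aper: "\<not> eventually_periodic bb"
begin

lemma B0: "B 0 = 0" by (simp add: B_def)
lemma B_le: "B n \<le> n" unfolding B_def by (rule cnt_le)
lemma T_le: "cnt bb 3 0 m \<le> m" by (rule cnt_le)

lemma cnt_v1: "cnt v 1 0 n = n - B n" using cnt_v[of 1 0 n] cnt_ua[of 0 n] by (simp add: B_def)
lemma cnt_v3: "cnt v 3 0 n = cnt bb 3 0 (B n)" using cnt_v[of 3 0 n] by (simp add: B0 B_def)
lemma cnt_v2: "cnt v 2 0 n = B n - cnt bb 3 0 (B n)" using cnt_v[of 2 0 n] cnt_bb2 by (simp add: B0 B_def)

lemma LB: "(\<lambda>n. real (B n) / real n) \<longlonglongrightarrow> \<alpha>" using fu by (simp add: B_def)

lemma Binf: "filterlim B at_top sequentially"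
proof -
  have "filterlim (\<lambda>n. real (B n) / real n * real n) at_top sequentially"
    by (rule filterlim_tendsto_pos_mult_at_top[OF LB a0 filterlim_real_sequentially])
  moreover have "eventually (\<lambda>n. real (B n) / real n * real n = real (B n)) sequentially"
    by (rule eventually_sequentiallyI[of 1]) simp
  ultimately have "filterlim (\<lambda>n. real (B n)) at_top sequentially"
    using filterlim_cong[OF refl refl \<open>eventually (\<lambda>n. real (B n) / real n * real n = real (B n)) sequentially\<close>]
    by blast
  then show ?thesis by (simp add: filterlim_sequentially_iff_filterlim_real)
qed

lemma LT: "(\<lambda>n. real (cnt bb 3 0 (B n)) / real n) \<longlonglongrightarrow> \<gamma> * \<alpha>"
proof -
  have A: "(\<lambda>n. real (cnt bb 3 0 (B n)) / real (B n)) \<longlonglongrightarrow> \<gamma>"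
    using filterlim_compose[OF fb Binf] by (simp add: o_def)
  have eq: "real (cnt bb 3 0 (B n)) / real n = (real (cnt bb 3 0 (B n)) / real (B n)) * (real (B n) / real n)" for n
    by (cases "B n = 0") (auto simp: field_simps)
  show ?thesis unfolding eq by (rule tendsto_mult[OF A LB])
qed

lemma F1: "(\<lambda>n. real (cnt v 1 0 n) / real n) \<longlonglongrightarrow> 1 - \<alpha>"
proof -
  have "(\<lambda>n. 1 - real (B n) / real n) \<longlonglongrightarrow> 1 - \<alpha>" by (intro tendsto_intros LB)
  moreover have "eventually (\<lambda>n. 1 - real (B n) / real n = real (cnt v 1 0 n) / real n) sequentially"
  proof (rule eventually_sequentiallyI[of 1])
    fix n :: nat assume "n \<ge> 1"
    have c: "real (cnt v 1 0 n) = real n - real (B n)"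
      by (simp only: cnt_v1) (use B_le[of n] in \<open>simp add: of_nat_diff\<close>)
    show "1 - real (B n) / real n = real (cnt v 1 0 n) / real n"
      unfolding c using \<open>n \<ge> 1\<close> by (simp add: field_simps)
  qed
  ultimately show ?thesis using tendsto_cong[OF \<open>eventually (\<lambda>n. 1 - real (B n) / real n = real (cnt v 1 0 n) / real n) sequentially\<close>]
    by blast
qed

lemma F3: "(\<lambda>n. real (cnt v 3 0 n) / real n) \<longlonglongrightarrow> \<gamma> * \<alpha>"
  using LT by (simp add: cnt_v3)

lemma F2: "(\<lambda>n. real (cnt v 2 0 n) / real n) \<longlonglongrightarrow> \<alpha> - \<gamma> * \<alpha>"
proof -
  have eq: "real (cnt v 2 0 n) / real n = real (B n) / real n - real (cnt bb 3 0 (B n)) / real n" for n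
    using T_le[of "B n"] by (simp add: cnt_v2 of_nat_diff diff_divide_distrib)
  show ?thesis unfolding eq by (intro tendsto_intros LB LT)
qed

definition G :: "nat \<Rightarrow> real \<Rightarrow> nat \<Rightarrow> real" where
  "G x f i = real (cnt v x 0 i) - f * real i"

lemma G_int: "G x f i + f * real i \<in> \<int>" by (simp add: G_def)

lemma G_add: "G x f (i + n) = G x f i + real (cnt v x i n) - f * real n"
  by (simp add: G_def cnt_add algebra_simps)

lemma G_osc:
  assumes balv: "C_balanced 1 v" and fr: "(\<lambda>n. real (cnt v x 0 n) / real n) \<longlonglongrightarrow> f"
  shows "\<bar>G x f i - G x f j\<bar> \<le> 1"
proof -
  have A: "\<bar>G x f (i + n) - G x f i\<bar> \<le> 1" for i n
    using freqA[OF balv fr, of i n] by (simp add: G_add algebra_simps)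
  show ?thesis
  proof (cases "i \<le> j")
    case True
    then show ?thesis using A[of i "j - i"] by (simp add: abs_minus_commute)
  next
    case False
    then show ?thesis using A[of j "i - j"] by simp
  qed
qed

lemma G_sum: "G 1 (1 - \<alpha>) i + G 2 (\<alpha> - \<gamma> * \<alpha>) i + G 3 (\<gamma> * \<alpha>) i = 0"
proof -
  have c1: "real (cnt v 1 0 i) = real i - real (B i)"
    by (simp only: cnt_v1) (use B_le[of i] in \<open>simp add: of_nat_diff\<close>)
  have c2: "real (cnt v 2 0 i) = real (B i) - real (cnt bb 3 0 (B i))"
    by (simp only: cnt_v2) (use T_le[of "B i"] in \<open>simp add: of_nat_diff\<close>)
  have c3: "real (cnt v 3 0 i) = real (cnt bb 3 0 (B i))" by (simp only: cnt_v3)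
  have "real (cnt v 1 0 i) + real (cnt v 2 0 i) + real (cnt v 3 0 i) = real i"
    unfolding c1 c2 c3 by simp
  then show ?thesis by (simp add: G_def algebra_simps)
qed

lemma bb_cnt2: "cnt bb 3 i 2 = (if bb i = 3 then 1 else 0) + (if bb (Suc i) = 3 then 1 else 0)"
  by (simp add: numeral_2_eq_2 cnt_Suc)

lemma v_cnt1: "cnt v x i (Suc 0) = (if v i = x then 1 else 0)"
  using cnt_Suc[of v x i 0] by simp

lemma per_from_alt:
  assumes balv: "C_balanced 1 v" and fr: "(\<lambda>n. real (cnt v x 0 n) / real n) \<longlonglongrightarrow> 1/2"
  shows "\<exists>K. (\<forall>i\<ge>K. G x (1/2) (i + 2) = G x (1/2) i) \<and> \<bar>G x (1/2) (K+1) - G x (1/2) K\<bar> = 1/2"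
proof -
  obtain K where K: "\<And>i. i \<ge> K \<Longrightarrow> cnt v x i 2 = 1" using altlemma[OF balv fr] by blast
  have "G x (1/2) (i + 2) = G x (1/2) i" if "i \<ge> K" for i
  proof -
    have "G x (1/2) (i + 2) = G x (1/2) i + real (cnt v x i 2) - 1/2 * real (2::nat)" by (rule G_add)
    then show ?thesis using K[OF that] by simp
  qed
  moreover have "\<bar>G x (1/2) (K+1) - G x (1/2) K\<bar> = 1/2"
  proof -
    have "G x (1/2) (K+1) = G x (1/2) K + real (cnt v x K 1) - 1/2 * real (1::nat)" by (rule G_add)
    then show ?thesis by (simp add: v_cnt1 split: if_splits)
  qed
  ultimately show ?thesis by blast
qed

lemma not_bal1:
  assumes n1: "\<alpha> \<noteq> 1 / (1 + \<gamma>)" and n2: "\<alpha> \<noteq> 1 / (2 - \<gamma>)"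
  shows "\<not> C_balanced 1 v"
proof
  assume balv: "C_balanced 1 v"
  define f1 where "f1 = 1 - \<alpha>"
  define f2 where "f2 = \<alpha> - \<gamma> * \<alpha>"
  define f3 where "f3 = \<gamma> * \<alpha>"
  define G1 where "G1 = G 1 f1"
  define G2 where "G2 = G 2 f2"
  define G3 where "G3 = G 3 f3"
  have o1: "\<And>i j. \<bar>G1 i - G1 j\<bar> \<le> 1" unfolding G1_def f1_def by (rule G_osc[OF balv F1])
  have o2': "\<And>i j. \<bar>G2 i - G2 j\<bar> \<le> 1" unfolding G2_def f2_def by (rule G_osc[OF balv F2])
  have o3: "\<And>i j. \<bar>G3 i - G3 j\<bar> \<le> 1" unfolding G3_def f3_def by (rule G_osc[OF balv F3])
  have sum: "G1 i + G2 i + G3 i = 0" for i unfolding G1_def G2_def G3_def f1_def f2_def f3_def by (rule G_sum)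
  have o2: "\<And>i j. \<bar>(G1 i + G3 i) - (G1 j + G3 j)\<bar> \<le> 1"
  proof -
    fix i j
    have "(G1 i + G3 i) - (G1 j + G3 j) = G2 j - G2 i" using sum[of i] sum[of j] by linarith
    then show "\<bar>(G1 i + G3 i) - (G1 j + G3 j)\<bar> \<le> 1" using o2'[of j i] by simp
  qed
  have irr1: "f1 \<notin> \<rat>"
  proof
    assume "f1 \<in> \<rat>"
    then have "1 - f1 \<in> \<rat>" by (intro Rats_diff) auto
    then show False using irr by (simp add: f1_def)
  qed
  have pos: "0 < f1" "0 < f3" "f1 + f3 < 1"
  proof -
    show "0 < f1" using a1 by (simp add: f1_def)
    show "0 < f3" using a0 g0 by (simp add: f3_def)
    have "\<gamma> * \<alpha> < 1 * \<alpha>" using g1 a0 by (intro mult_strict_right_mono) auto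
    then show "f1 + f3 < 1" by (simp add: f1_def f3_def)
  qed
  have i1: "\<And>i. G1 i + f1 * real i \<in> \<int>" unfolding G1_def by (rule G_int)
  have i3: "\<And>i. G3 i + f3 * real i \<in> \<int>" unfolding G3_def by (rule G_int)
  have D: "f1 = f3 \<or> 2*f1 + f3 = 1 \<or> f1 + 2*f3 = 1 \<or> f3 = 1/2 \<or> f1 + f3 = 1/2"
    by (rule graham3[OF i1 i3 o1 o3 o2 irr1 pos])
  then show False
  proof (elim disjE)
    assume "f1 = f3"
    then have "\<alpha> * (1 + \<gamma>) = 1" by (simp add: f1_def f3_def algebra_simps)
    then have "\<alpha> = 1 / (1 + \<gamma>)" using g0 by (simp add: field_simps)
    with n1 show False by simp
  next
    assume "2*f1 + f3 = 1"
    then have "\<alpha> * (2 - \<gamma>) = 1" by (simp add: f1_def f3_def algebra_simps)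
    then have "\<alpha> = 1 / (2 - \<gamma>)" using g1 by (simp add: field_simps)
    with n2 show False by simp
  next
    assume "f1 + 2*f3 = 1"
    then have "\<alpha> * (2 * \<gamma> - 1) = 0" by (simp add: f1_def f3_def algebra_simps)
    then have g: "\<gamma> = 1/2" using a0 by simp
    obtain K where K: "\<And>i. i \<ge> K \<Longrightarrow> cnt bb 3 i 2 = 1" using altlemma[OF balb] fb g by blast
    have "bb (n + 2) = bb n" if nK: "n \<ge> K" for n
    proof -
      have e1: "(if bb n = 3 then 1 else 0) + (if bb (Suc n) = 3 then 1 else 0) = (1::nat)"
        using K[OF nK] unfolding bb_cnt2 .
      have e2: "(if bb (Suc n) = 3 then 1 else 0) + (if bb (Suc (Suc n)) = 3 then 1 else 0) = (1::nat)"
        using K[of "Suc n"] nK unfolding bb_cnt2 by simp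
      have "bb n = 3 \<longleftrightarrow> bb (Suc (Suc n)) = 3"
        using e1 e2 by (cases "bb n = 3"; cases "bb (Suc n) = 3"; cases "bb (Suc (Suc n)) = 3") simp_all
      moreover have "bb n = 2 \<or> bb n = 3" "bb (Suc (Suc n)) = 2 \<or> bb (Suc (Suc n)) = 3" using rbb by blast+
      ultimately have "bb (Suc (Suc n)) = bb n" by force
      then show ?thesis by simp
    qed
    then have "eventually_periodic bb" unfolding eventually_periodic_def
      by (intro exI[of _ "2::nat"] conjI exI[of _ K] allI impI) auto
    with aper show False by simp
  next
    assume h: "f3 = 1/2"
    have fr: "(\<lambda>n. real (cnt v 3 0 n) / real n) \<longlonglongrightarrow> 1/2" using F3 h unfolding f3_def by simp
    have G3h: "G3 = G 3 (1/2)" unfolding G3_def h ..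
    obtain K where K: "\<forall>i\<ge>K. G3 (i + 2) = G3 i" "\<bar>G3 (K+1) - G3 K\<bar> = 1/2"
      using per_from_alt[OF balv fr] unfolding G3h by blast
    obtain i j where "\<bar>(G1 i + G3 i) - (G1 j + G3 j)\<bar> > 1"
      using half_contra[OF i1 irr1 o1 K(1)[rule_format] K(2)] by blast
    with o2[of i j] show False by simp
  next
    assume "f1 + f3 = 1/2"
    then have h: "f2 = 1/2" by (simp add: f1_def f2_def f3_def algebra_simps)
    have fr: "(\<lambda>n. real (cnt v 2 0 n) / real n) \<longlonglongrightarrow> 1/2" using F2 h unfolding f2_def by simp
    have G2h: "G2 = G 2 (1/2)" unfolding G2_def h ..
    obtain K where K: "\<forall>i\<ge>K. G2 (i + 2) = G2 i" "\<bar>G2 (K+1) - G2 K\<bar> = 1/2"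
      using per_from_alt[OF balv fr] unfolding G2h by blast
    obtain i j where ij: "\<bar>(G1 i + G2 i) - (G1 j + G2 j)\<bar> > 1"
      using half_contra[OF i1 irr1 o1 K(1)[rule_format] K(2)] by blast
    have "(G1 i + G2 i) - (G1 j + G2 j) = G3 j - G3 i" using sum[of i] sum[of j] by linarith
    with ij o3[of j i] show False by simp
  qed
qed

end

theorem theorem2:
  fixes u :: "nat \<Rightarrow> 'a" and a b :: 'a and bb :: "nat \<Rightarrow> nat" and \<alpha> \<gamma> :: real
  assumes su: "sturmian u a b"
    and fu: "has_freq u b \<alpha>"
    and irr: "\<alpha> \<notin> \<rat>" and a01: "0 < \<alpha>" "\<alpha> < 1"
    and sb: "sturmian bb 2 3"
    and fb: "has_freq bb 3 \<gamma>" and g01: "0 < \<gamma>" "\<gamma> < 1"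
  defines "v \<equiv> colour u a (\<lambda>_. 1) bb"
  shows "C_balanced 2 v
    \<and> (\<alpha> \<notin> {1 / (1 + \<gamma>), 1 / (2 - \<gamma>)} \<longrightarrow> \<not> C_balanced 1 v)
    \<and> (\<forall>n\<ge>1. int (factor_complexity v n) \<le> int (P_alpha u a b \<alpha> n) + (int n + 1) * \<lceil>real n * \<alpha>\<rceil>
              \<and> abelian_complexity v n \<le> 4)"
proof -
  have ab: "a \<noteq> b" and ru: "\<And>i. u i = a \<or> u i = b" and balu: "C_balanced 1 u"
    using su unfolding sturmian_def by auto
  have rbb: "\<And>i. bb i = 2 \<or> bb i = 3" and balb: "C_balanced 1 bb" and aper: "\<not> eventually_periodic bb"
    using sb unfolding sturmian_def by auto
  interpret F: colfull u a b bb \<alpha> \<gamma>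
  proof unfold_locales
    show "(\<lambda>n. real (cnt u b 0 n) / real n) \<longlonglongrightarrow> \<alpha>" using fu by (simp add: has_freq_def cnt_def)
    show "(\<lambda>m. real (cnt bb 3 0 m) / real m) \<longlonglongrightarrow> \<gamma>" using fb by (simp add: has_freq_def cnt_def)
  qed (use ab ru balu rbb balb aper irr a01 g01 in auto)
  have vv: "v = F.v"
  proof (rule ext)
    fix n
    show "v n = F.v n"
    proof (cases "u n = a")
      case True
      then show ?thesis by (simp add: v_def colour_def F.v_at)
    next
      case False
      then have "u n = b" using ru by auto
      then show ?thesis using False by (simp add: v_def colour_def F.v_at F.B_def cnt_def)
    qed
  qed
  show ?thesis unfolding vv using F.v_bal2 F.not_bal1 F.complexity_bound F.v_abelian by auto
qed

end
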